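(* Assume (A1) and (A2). Then there exists a constant $c>0$ such that for any $x,x'\in\mathbb S_+^{d-1}$ and $n\geqslant1$, \[ \mathbb E|S_n^x-S_n^{x'}|\leqslant\mathbb E^{1/2}\big[|S_n^x-S_n^{x'}|^2\big]\leqslant c\,\mathbf d(x,x') \] and \[ \mathbb E\Big[\Big|\min_{1\leqslant j\leqslant n}S_j^x-\min_{1\leqslant j\leqslant n}S_j^{x'}\Big|\Big]\leqslant\mathbb E^{1/2}\Big[\Big|\min_{1\leqslant j\leqslant n}S_j^x-\min_{1\leqslant j\leqslant n}S_j^{x'}\Big|^2\Big]\leqslant c\,\mathbf d(x,x'). \]
   Context: Let $d\geqslant2$, $|x|=\sum_i|\langle x,e_i\rangle|$, $\mathbb S_+^{d-1}=\{x\in\mathbb R_+^d:|x|=1\}$. $\mathcal M_+$: $d\times d$ allowable matrices (nonnegative, each row and column has a positive entry); $\mathcal M_+^\circ$: strictly positive matrices. $\|g\|=\sup_{x\in\mathbb S_+^{d-1}}|gx|$, $\iota(g)=\inf_{x\in\mathbb S_+^{d-1}}|gx|$, $N(g)=\max\{\|g\|,\iota(g)^{-1}\}$. $(g_n)$ i.i.d. with law $\mu$; $S_n^x=\log|g_n\cdots g_1x|$. (A1) $\mathbb P(\bigcup_n\{g_n\cdots g_1\in\mathcal M_+^\circ\})>0$. (A2) $\int(\log N(g))^{2+\delta}\mu(dg)<\infty$ for some $\delta>0$. Hilbert metric $\mathbf d(x,x')=\frac{1-m(x,x')m(x',x)}{1+m(x,x')m(x',x)}$, $m(x,x')=\min_i\langle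 x,e_i\rangle/\langle x',e_i\rangle$. *)

theory Defs
  imports "HOL-Probability.Probability"
begin

definition l1 :: "real ^ 'n \<Rightarrow> real" where
  "l1 x = (\<Sum>i\<in>UNIV. \<bar>x $ i\<bar>)"

definition pos_sphere :: "(real ^ 'n) set" where
  "pos_sphere = {x. (\<forall>i. 0 \<le> x $ i) \<and> l1 x = 1}"

definition allowable :: "real ^ 'n ^ 'n \<Rightarrow> bool" where
  "allowable g \<longleftrightarrow> (\<forall>i j. 0 \<le> g $ i $ j)
     \<and> (\<forall>i. \<exists>j. 0 < g $ i $ j) \<and> (\<forall>j. \<exists>i. 0 < g $ i $ j)"

definition strictly_positive :: "real ^ 'n ^ 'n \<Rightarrow> bool" where
  "strictly_positive g \<longleftrightarrow> (\<forall>i j. 0 < g $ i $ j)"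

definition mnorm :: "real ^ 'n ^ 'n \<Rightarrow> real" where
  "mnorm g = (SUP x\<in>pos_sphere. l1 (g *v x))"

definition iota :: "real ^ 'n ^ 'n \<Rightarrow> real" where
  "iota g = (INF x\<in>pos_sphere. l1 (g *v x))"

definition NN :: "real ^ 'n ^ 'n \<Rightarrow> real" where
  "NN g = max (mnorm g) (inverse (iota g))"

text \<open>Left product g (n-1) ** ... ** g 0 (the paper's g_n ... g_1, with g_k indexed from 0).\<close>
fun lprod :: "(nat \<Rightarrow> real ^ 'n ^ 'n) \<Rightarrow> nat \<Rightarrow> real ^ 'n ^ 'n" where
  "lprod g 0 = mat 1"
| "lprod g (Suc n) = g n ** lprod g n"

text \<open>m(x,y) = sup{lambda : lambda y <= x} = min over i with y_i > 0 of x_i / y_i.\<close>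
definition mratio :: "real ^ 'n \<Rightarrow> real ^ 'n \<Rightarrow> real" where
  "mratio x y = Min {x $ i / y $ i | i. 0 < y $ i}"

definition hdist :: "real ^ 'n \<Rightarrow> real ^ 'n \<Rightarrow> real" where
  "hdist x y = (1 - mratio x y * mratio y x) / (1 + mratio x y * mratio y x)"

definition Slog :: "(nat \<Rightarrow> real ^ 'n ^ 'n) \<Rightarrow> nat \<Rightarrow> real ^ 'n \<Rightarrow> real" where
  "Slog g n x = ln (l1 (lprod g n *v x))"

end

theory Submission
  imports Defs
begin


definition nonneg :: "real^'n^'n \<Rightarrow> bool" where
  "nonneg A \<longleftrightarrow> (\<forall>i j. 0 \<le> A $ i $ j)"

definition csum :: "real^'n^'n \<Rightarrow> 'n \<Rightarrow> real" where
  "csum A j = (\<Sum>i\<in>UNIV. A $ i $ j)"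

definition maxc :: "real^'n^'n \<Rightarrow> real" where "maxc A = Max (range (csum A))"
definition minc :: "real^'n^'n \<Rightarrow> real" where "minc A = Min (range (csum A))"
definition WW :: "real^'n^'n \<Rightarrow> real" where "WW A = ln (maxc A) - ln (minc A)"

definition good :: "real \<Rightarrow> real^'n^'n \<Rightarrow> bool" where
  "good e B \<longleftrightarrow> (\<forall>i j. 0 < B $ i $ j) \<and> (\<forall>i j k l. e * B $ k $ l \<le> B $ i $ j)"

lemma allowable_nonneg: "allowable A \<Longrightarrow> nonneg A"
  by (simp add: allowable_def nonneg_def)

lemma csum_nonneg: "nonneg A \<Longrightarrow> 0 \<le> csum A j"
  unfolding csum_def nonneg_def by (simp add: sum_nonneg)

lemma csum_pos: "allowable A \<Longrightarrow> 0 < csum A j"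
proof -
  assume a: "allowable A"
  then obtain i where "0 < A $ i $ j" unfolding allowable_def by blast
  then show ?thesis unfolding csum_def
    using a by (intro sum_pos2[of UNIV i]) (auto simp: allowable_def)
qed

lemma csum_le_maxc: "csum A j \<le> maxc A"
  unfolding maxc_def by (rule Max_ge) auto

lemma minc_le_csum: "minc A \<le> csum A j"
  unfolding minc_def by (rule Min_le) auto

lemma maxc_in: "\<exists>j. maxc A = csum A j"
proof -
  have "Max (range (csum A)) \<in> range (csum A)" by (rule Max_in) auto
  then show ?thesis unfolding maxc_def by (metis rangeE)
qed

lemma minc_in: "\<exists>j. minc A = csum A j"
proof -
  have "Min (range (csum A)) \<in> range (csum A)" by (rule Min_in) auto
  then show ?thesis unfolding minc_def by (metis rangeE)
qed

lemma minc_pos: "allowable A \<Longrightarrow> 0 < minc A"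
  using minc_in[of A] csum_pos by metis

lemma minc_le_maxc: "minc A \<le> maxc A"
  using minc_le_csum[of A] csum_le_maxc[of A] by (meson order_trans)

lemma WW_nonneg: "allowable A \<Longrightarrow> 0 \<le> WW A"
  unfolding WW_def using minc_pos[of A] minc_le_maxc[of A] by simp

lemma l1_mult:
  assumes "nonneg A" "\<And>j. 0 \<le> x $ j"
  shows "l1 (A *v x) = (\<Sum>j\<in>UNIV. x $ j * csum A j)"
proof -
  have "l1 (A *v x) = (\<Sum>i\<in>UNIV. \<Sum>j\<in>UNIV. A $ i $ j * x $ j)"
    unfolding l1_def matrix_vector_mult_def using assms
  proof (intro sum.cong refl)
    fix i
    have "0 \<le> (\<Sum>j\<in>UNIV. A $ i $ j * x $ j)"
      using assms by (intro sum_nonneg mult_nonneg_nonneg) (auto simp: nonneg_def)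
    then show "\<bar>(\<chi> i. \<Sum>j\<in>UNIV. A $ i $ j * x $ j) $ i\<bar> = (\<Sum>j\<in>UNIV. A $ i $ j * x $ j)"
      by simp
  qed
  also have "\<dots> = (\<Sum>j\<in>UNIV. \<Sum>i\<in>UNIV. A $ i $ j * x $ j)"
    by (rule sum.swap)
  also have "\<dots> = (\<Sum>j\<in>UNIV. x $ j * csum A j)"
    unfolding csum_def by (simp add: sum_distrib_left mult.commute)
  finally show ?thesis .
qed

lemma pos_sphere_sum: "x \<in> pos_sphere \<Longrightarrow> (\<Sum>j\<in>UNIV. x $ j) = 1"
  unfolding pos_sphere_def l1_def by auto

lemma l1_bounds:
  assumes "x \<in> pos_sphere" "nonneg A"
  shows "minc A \<le> l1 (A *v x)" "l1 (A *v x) \<le> maxc A"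
proof -
  have x0: "\<And>j. 0 \<le> x $ j" using assms(1) by (simp add: pos_sphere_def)
  have e: "l1 (A *v x) = (\<Sum>j\<in>UNIV. x $ j * csum A j)" by (rule l1_mult[OF assms(2) x0])
  have "(\<Sum>j\<in>UNIV. x $ j * minc A) \<le> (\<Sum>j\<in>UNIV. x $ j * csum A j)"
    by (intro sum_mono mult_left_mono minc_le_csum x0)
  then show "minc A \<le> l1 (A *v x)"
    using e pos_sphere_sum[OF assms(1)] by (simp add: sum_distrib_right[symmetric])
  have "(\<Sum>j\<in>UNIV. x $ j * csum A j) \<le> (\<Sum>j\<in>UNIV. x $ j * maxc A)"
    by (intro sum_mono mult_left_mono csum_le_maxc x0)
  then show "l1 (A *v x) \<le> maxc A"
    using e pos_sphere_sum[OF assms(1)] by (simp add: sum_distrib_right[symmetric])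
qed

lemma D_bound:
  assumes "x \<in> pos_sphere" "x' \<in> pos_sphere" "allowable A"
  shows "\<bar>ln (l1 (A *v x)) - ln (l1 (A *v x'))\<bar> \<le> WW A"
proof -
  have n: "nonneg A" using assms(3) by (rule allowable_nonneg)
  have p: "0 < minc A" using assms(3) by (rule minc_pos)
  note b1 = l1_bounds[OF assms(1) n] and b2 = l1_bounds[OF assms(2) n]
  have "ln (minc A) \<le> ln (l1 (A *v x))" "ln (l1 (A *v x)) \<le> ln (maxc A)"
       "ln (minc A) \<le> ln (l1 (A *v x'))" "ln (l1 (A *v x')) \<le> ln (maxc A)"
    using b1 b2 p by auto
  then show ?thesis unfolding WW_def by linarith
qed

lemma csum_mult: "csum (A ** B) j = (\<Sum>l\<in>UNIV. csum A l * B $ l $ j)"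
proof -
  have "csum (A ** B) j = (\<Sum>i\<in>UNIV. \<Sum>l\<in>UNIV. A $ i $ l * B $ l $ j)"
    unfolding csum_def matrix_matrix_mult_def by simp
  also have "\<dots> = (\<Sum>l\<in>UNIV. \<Sum>i\<in>UNIV. A $ i $ l * B $ l $ j)" by (rule sum.swap)
  also have "\<dots> = (\<Sum>l\<in>UNIV. csum A l * B $ l $ j)"
    unfolding csum_def by (simp add: sum_distrib_right)
  finally show ?thesis .
qed

lemma allowable_mult:
  assumes "allowable A" "allowable B"
  shows "allowable (A ** B)"
  unfolding allowable_def
proof (intro conjI allI)
  fix i j show "0 \<le> (A ** B) $ i $ j"
    using assms unfolding allowable_def matrix_matrix_mult_def by (auto intro!: sum_nonneg)
next
  fix i
  obtain k where k: "0 < A $ i $ k" using assms(1) unfolding allowable_def by blast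
  obtain j where j: "0 < B $ k $ j" using assms(2) unfolding allowable_def by blast
  have "0 < (A ** B) $ i $ j"
    unfolding matrix_matrix_mult_def using assms k j
    by (auto simp: allowable_def intro!: sum_pos2[of UNIV k])
  then show "\<exists>j. 0 < (A ** B) $ i $ j" by blast
next
  fix j
  obtain k where k: "0 < B $ k $ j" using assms(2) unfolding allowable_def by blast
  obtain i where i: "0 < A $ i $ k" using assms(1) unfolding allowable_def by blast
  have "0 < (A ** B) $ i $ j"
    unfolding matrix_matrix_mult_def using assms k i
    by (auto simp: allowable_def intro!: sum_pos2[of UNIV k])
  then show "\<exists>i. 0 < (A ** B) $ i $ j" by blast
qed

lemma allowable_id: "allowable (mat 1 :: real^'n^'n)"
  unfolding allowable_def mat_def by auto

lemma lprod_allowable: "(\<And>k. k < n \<Longrightarrow> allowable (h k)) \<Longrightarrow> allowable (lprod h n)"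
  by (induction n) (auto simp: allowable_id allowable_mult)

lemma lprod_cong: "(\<And>k. k < n \<Longrightarrow> h k = h' k) \<Longrightarrow> lprod h n = lprod h' n"
  by (induction n) auto

lemma lprod_add: "lprod h (a + b) = lprod (\<lambda>k. h (a + k)) b ** lprod h a"
  by (induction b) (auto simp: matrix_mul_assoc)

lemma maxc_mult:
  assumes "nonneg A" "nonneg B"
  shows "maxc (A ** B) \<le> maxc A * maxc B" "minc A * minc B \<le> minc (A ** B)"
proof -
  have mA: "0 \<le> minc A" using minc_in[of A] csum_nonneg[OF assms(1)] by metis
  have MA: "0 \<le> maxc A" using mA minc_le_maxc[of A] by linarith
  have Bn: "\<And>l j. 0 \<le> B $ l $ j" using assms(2) by (simp add: nonneg_def)
  obtain j where j: "maxc (A ** B) = csum (A ** B) j" using maxc_in by blast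
  have "csum (A ** B) j \<le> (\<Sum>l\<in>UNIV. maxc A * B $ l $ j)"
    unfolding csum_mult by (intro sum_mono mult_right_mono csum_le_maxc Bn)
  also have "\<dots> = maxc A * csum B j" by (simp add: csum_def sum_distrib_left)
  also have "\<dots> \<le> maxc A * maxc B" by (intro mult_left_mono csum_le_maxc MA)
  finally show "maxc (A ** B) \<le> maxc A * maxc B" using j by simp
  obtain j where j: "minc (A ** B) = csum (A ** B) j" using minc_in by blast
  have "minc A * minc B \<le> minc A * csum B j" by (intro mult_left_mono minc_le_csum mA)
  also have "\<dots> = (\<Sum>l\<in>UNIV. minc A * B $ l $ j)" by (simp add: csum_def sum_distrib_left)
  also have "\<dots> \<le> csum (A ** B) j"
    unfolding csum_mult by (intro sum_mono mult_right_mono minc_le_csum Bn)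
  finally show "minc A * minc B \<le> minc (A ** B)" using j by simp
qed

lemma WW_mult:
  assumes "allowable A" "allowable B"
  shows "WW (A ** B) \<le> WW A + WW B"
proof -
  have pA: "0 < minc A" "0 < minc B" using assms by (auto intro: minc_pos)
  have pM: "0 < maxc A" "0 < maxc B" using pA minc_le_maxc[of A] minc_le_maxc[of B] by linarith+
  have pAB: "0 < minc (A ** B)" by (intro minc_pos allowable_mult assms)
  note m = maxc_mult[OF allowable_nonneg[OF assms(1)] allowable_nonneg[OF assms(2)]]
  have "ln (maxc (A ** B)) \<le> ln (maxc A * maxc B)"
    using m(1) pAB minc_le_maxc[of "A ** B"] by (subst ln_le_cancel_iff) auto
  moreover have "ln (minc A * minc B) \<le> ln (minc (A ** B))"
    using m(2) pA pAB by (subst ln_le_cancel_iff) auto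
  ultimately show ?thesis unfolding WW_def using pA pM by (simp add: ln_mult)
qed

lemma WW_id: "WW (mat 1 :: real^'n^'n) = 0"
proof -
  have "\<And>j. csum (mat 1 :: real^'n^'n) j = 1" unfolding csum_def mat_def by simp
  then have "range (csum (mat 1 :: real^'n^'n)) = {1}" by auto
  then show ?thesis unfolding WW_def maxc_def minc_def by simp
qed

lemma WW_lprod:
  "(\<And>k. k < n \<Longrightarrow> allowable (h k)) \<Longrightarrow> WW (lprod h n) \<le> (\<Sum>k<n. WW (h k))"
proof (induction n)
  case 0 then show ?case by (simp add: WW_id)
next
  case (Suc n)
  have "WW (lprod h (Suc n)) \<le> WW (h n) + WW (lprod h n)"
    using Suc.prems by (simp add: WW_mult lprod_allowable)
  then show ?case using Suc by simp
qed

lemma WW_reset: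
  assumes g: "good e B" and e: "0 < e" and H: "allowable H"
  shows "WW (H ** B) \<le> - 2 * ln e"
proof -
  obtain a :: 'a where True by blast
  define b where "b = B $ a $ a"
  have bp: "0 < b" using g by (simp add: good_def b_def)
  have lo: "\<And>k l. e * b \<le> B $ k $ l" using g by (simp add: good_def b_def)
  have hi: "\<And>k l. B $ k $ l \<le> b / e" using g e by (simp add: good_def b_def field_simps)
  define S where "S = (\<Sum>k\<in>UNIV. csum H k)"
  have S: "0 < S" unfolding S_def using csum_pos[OF H] by (simp add: sum_pos)
  have Hn: "\<And>k. 0 \<le> csum H k" using csum_pos[OF H] less_imp_le by blast
  have up: "\<And>l. csum (H ** B) l \<le> b / e * S"
    unfolding csum_mult S_def sum_distrib_left
    by (intro sum_mono) (metis Hn hi mult.commute mult_left_mono)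
  have dn: "\<And>l. e * b * S \<le> csum (H ** B) l"
    unfolding csum_mult S_def sum_distrib_left
    by (intro sum_mono) (metis Hn lo mult.commute mult_left_mono)
  have M: "maxc (H ** B) \<le> b / e * S" using maxc_in up by metis
  have m: "e * b * S \<le> minc (H ** B)" using minc_in dn by metis
  have p: "0 < e * b * S" using e bp S by simp
  have "ln (maxc (H ** B)) \<le> ln (b / e * S)"
    using M p m minc_le_maxc[of "H ** B"] by (subst ln_le_cancel_iff) auto
  moreover have "ln (e * b * S) \<le> ln (minc (H ** B))"
    using m p by (subst ln_le_cancel_iff) auto
  ultimately show ?thesis unfolding WW_def using e bp S by (simp add: ln_mult ln_div)
qed

lemma mratio_set: "{x $ i / y $ i | i. 0 < y $ i} = (\<lambda>i. x $ i / y $ i) ` {i. 0 < y $ i}"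
  by auto

lemma pos_sphere_ex: "y \<in> pos_sphere \<Longrightarrow> \<exists>i. 0 < y $ i"
proof (rule ccontr)
  assume y: "y \<in> pos_sphere" and "\<not> (\<exists>i. 0 < y $ i)"
  then have "\<And>i. y $ i = 0"
  proof -
    fix i
    have "\<not> 0 < y $ i" "0 \<le> y $ i" using y \<open>\<not> (\<exists>i. 0 < y $ i)\<close> by (auto simp: pos_sphere_def)
    then show "y $ i = 0" by linarith
  qed
  then show False using pos_sphere_sum[OF y] by simp
qed

lemma mratio_le:
  assumes "y \<in> pos_sphere" "0 < y $ i"
  shows "mratio x y \<le> x $ i / y $ i"
  unfolding mratio_def mratio_set using assms by (intro Min_le) auto

lemma mratio_nonneg:
  assumes "x \<in> pos_sphere" "y \<in> pos_sphere"
  shows "0 \<le> mratio x y"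
proof -
  obtain i where i: "0 < y $ i" using pos_sphere_ex[OF assms(2)] by blast
  show ?thesis unfolding mratio_def mratio_set using assms i
    by (subst Min_ge_iff) (auto simp: pos_sphere_def)
qed

lemma mratio_mult_le:
  assumes "x \<in> pos_sphere" "y \<in> pos_sphere"
  shows "mratio x y * y $ i \<le> x $ i"
proof (cases "0 < y $ i")
  case True
  then show ?thesis using mratio_le[OF assms(2) True, of x] by (simp add: field_simps)
next
  case False
  then have "y $ i = 0" using assms(2) by (auto simp: pos_sphere_def intro: order.antisym)
  then show ?thesis using assms(1) by (simp add: pos_sphere_def)
qed

lemma mratio_le1:
  assumes "x \<in> pos_sphere" "y \<in> pos_sphere"
  shows "mratio x y \<le> 1"
proof -
  have "(\<Sum>i\<in>UNIV. mratio x y * y $ i) \<le> (\<Sum>i\<in>UNIV. x $ i)"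
    by (intro sum_mono mratio_mult_le assms)
  then show ?thesis using pos_sphere_sum[OF assms(1)] pos_sphere_sum[OF assms(2)]
    by (simp add: sum_distrib_left[symmetric])
qed

lemma l1_mratio:
  assumes "x \<in> pos_sphere" "y \<in> pos_sphere" "nonneg A"
  shows "mratio x y * l1 (A *v y) \<le> l1 (A *v x)"
proof -
  have x0: "\<And>j. 0 \<le> x $ j" "\<And>j. 0 \<le> y $ j" using assms by (auto simp: pos_sphere_def)
  have "mratio x y * l1 (A *v y) = (\<Sum>j\<in>UNIV. (mratio x y * y $ j) * csum A j)"
    unfolding l1_mult[OF assms(3) x0(2)] by (simp add: sum_distrib_left mult.assoc)
  also have "\<dots> \<le> (\<Sum>j\<in>UNIV. x $ j * csum A j)"
    by (intro sum_mono mult_right_mono mratio_mult_le assms csum_nonneg)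
  also have "\<dots> = l1 (A *v x)" using l1_mult[OF assms(3) x0(1)] by simp
  finally show ?thesis .
qed

lemma D_bound_small:
  assumes x: "x \<in> pos_sphere" and x': "x' \<in> pos_sphere" and A: "allowable A"
    and t: "1/3 \<le> mratio x x' * mratio x' x"
  shows "\<bar>ln (l1 (A *v x)) - ln (l1 (A *v x'))\<bar> \<le> 6 * hdist x x'"
proof -
  define m where "m = mratio x x'"
  define m' where "m' = mratio x' x"
  define t where "t = m * m'"
  have m0: "0 \<le> m" "0 \<le> m'" "m \<le> 1" "m' \<le> 1"
    using mratio_nonneg[OF x x'] mratio_nonneg[OF x' x] mratio_le1[OF x x'] mratio_le1[OF x' x]
    unfolding m_def m'_def by blast+
  have t3: "1/3 \<le> t" using t by (simp add: t_def m_def m'_def)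
  have "m \<noteq> 0" "m' \<noteq> 0" using t3 by (auto simp: t_def)
  then have mp: "0 < m" "0 < m'" using m0 by linarith+
  have n: "nonneg A" using A by (rule allowable_nonneg)
  define a where "a = l1 (A *v x)"
  define a' where "a' = l1 (A *v x')"
  have ap: "0 < a" "0 < a'" unfolding a_def a'_def
    using l1_bounds(1)[OF x n] l1_bounds(1)[OF x' n] minc_pos[OF A] by linarith+
  have r1: "m * a' \<le> a" unfolding m_def a_def a'_def by (rule l1_mratio[OF x x' n])
  have r2: "m' * a \<le> a'" unfolding m'_def a_def a'_def by (rule l1_mratio[OF x' x n])
  have "ln (m * a') \<le> ln a" using r1 mp ap by (subst ln_le_cancel_iff) auto
  then have "ln m + ln a' \<le> ln a" using mp ap by (simp add: ln_mult)
  moreover have "ln (m' * a) \<le> ln a'" using r2 mp ap by (subst ln_le_cancel_iff) auto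
  then have "ln m' + ln a \<le> ln a'" using mp ap by (simp add: ln_mult)
  moreover have "ln m \<le> 0" "ln m' \<le> 0" using mp m0 by auto
  ultimately have "\<bar>ln a - ln a'\<bar> \<le> - ln m - ln m'" unfolding abs_le_iff by linarith
  also have "- ln m - ln m' = - ln t" unfolding t_def using mp by (simp add: ln_mult)
  also have "- ln t = ln (1/t)" using t3 by (simp add: ln_div)
  also have "\<dots> \<le> 1/t - 1" using t3 by (intro ln_le_minus_one) auto
  also have "\<dots> \<le> 6 * ((1 - t) / (1 + t))"
  proof -
    have t1: "t \<le> 1" unfolding t_def using m0 by (simp add: mult_le_one)
    have "1/t - 1 = (1 - t) / t" using t3 by (simp add: field_simps)
    also have "\<dots> \<le> 3 * (1 - t)"
    proof -
      have p: "0 \<le> (1 - t) * (3 * t - 1)" using t3 t1 by (intro mult_nonneg_nonneg) auto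
      have "1 - t \<le> 3 * (1 - t) * t" using p by (simp add: algebra_simps)
      then show ?thesis using t3 by (simp add: pos_divide_le_eq)
    qed
    also have "\<dots> \<le> 6 * ((1 - t) / (1 + t))"
    proof -
      have "3 * (1 - t) * (1 + t) \<le> 3 * (1 - t) * 2" using t1 by (intro mult_left_mono) auto
      then have "3 * (1 - t) * (1 + t) \<le> 6 * (1 - t)" by simp
      then have "3 * (1 - t) \<le> 6 * (1 - t) / (1 + t)" using t3 by (simp add: pos_le_divide_eq)
      then show ?thesis by simp
    qed
    finally show ?thesis .
  qed
  finally show ?thesis unfolding hdist_def t_def m_def m'_def a_def a'_def .
qed

lemma hdist_large:
  assumes "0 \<le> mratio x x' * mratio x' x" "mratio x x' * mratio x' x < 1/3"
  shows "1/2 \<le> hdist x x'"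
  using assms unfolding hdist_def by (simp add: field_simps)

lemma Min_diff_bound:
  assumes "finite S" "S \<noteq> {}" "\<And>j. j \<in> S \<Longrightarrow> \<bar>f j - h j\<bar> \<le> (c::real)"
  shows "\<bar>Min (f ` S) - Min (h ` S)\<bar> \<le> c"
proof -
  have "Min (f ` S) \<in> f ` S" "Min (h ` S) \<in> h ` S" using assms by (intro Min_in; simp)+
  then obtain j1 j2 where j1: "j1 \<in> S" "Min (f ` S) = f j1" and j2: "j2 \<in> S" "Min (h ` S) = h j2"
    by blast
  have "Min (f ` S) \<le> f j2" using assms(1) j2(1) by (intro Min_le) auto
  moreover have "Min (h ` S) \<le> h j1" using assms(1) j1(1) by (intro Min_le) auto
  ultimately show ?thesis using assms(3)[OF j1(1)] assms(3)[OF j2(1)] j1 j2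
    unfolding abs_le_iff by linarith
qed

lemma sum_lessThan_add_nat: "(\<Sum>i<(a::nat) + (m::nat). f i :: real) = (\<Sum>i<a. f i) + (\<Sum>k<m. f (a + k))"
  by (induction m) (simp_all add: add.assoc)

lemma sum_blocks: "(\<Sum>b<(B::nat). \<Sum>k<(m::nat). f (m * b + k)) = (\<Sum>i<m * B. f i :: real)"
proof (induction B)
  case 0 then show ?case by simp
next
  case (Suc B)
  have "(\<Sum>i<m * Suc B. f i) = (\<Sum>i<m * B + m. f i)" by (simp add: algebra_simps)
  also have "\<dots> = (\<Sum>i<m * B. f i) + (\<Sum>k<m. f (m * B + k))"
    by (rule sum_lessThan_add_nat)
  finally show ?case using Suc by simp
qed

lemma WW_blocks:
  fixes h :: "nat \<Rightarrow> real^'n^'n"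
  assumes al: "\<And>k. allowable (h k)" and e: "0 < e" "e \<le> 1" and j: "j \<le> m * B"
  shows "WW (lprod h j) \<le> - 2 * ln e + (\<Sum>b<B. if (\<forall>b'<b. \<not> good e (lprod (\<lambda>k. h (m * b' + k)) m))
            then (\<Sum>k<m. WW (h (m * b + k))) else 0)"
    (is "_ \<le> _ + ?S")
proof -
  have W0: "\<And>k. 0 \<le> WW (h k)" using al WW_nonneg by blast
  have le0: "0 \<le> - 2 * ln e" using e by simp
  have sub: "\<And>a b. a \<le> b \<Longrightarrow> (\<Sum>i<a. WW (h i)) \<le> (\<Sum>i<b. WW (h i))"
    by (intro sum_mono2) (auto intro: W0)
  have Wj: "WW (lprod h j) \<le> (\<Sum>i<j. WW (h i))" using al by (intro WW_lprod) auto
  let ?g = "\<lambda>b. good e (lprod (\<lambda>k. h (m * b + k)) m)"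
  show ?thesis
  proof (cases "\<exists>b<B. ?g b")
    case False
    have "?S = (\<Sum>b<B. \<Sum>k<m. WW (h (m * b + k)))"
    proof (intro sum.cong refl)
      fix b assume "b \<in> {..<B}"
      then have "\<forall>b'<b. \<not> ?g b'" using False by auto
      then show "(if \<forall>b'<b. \<not> ?g b' then \<Sum>k<m. WW (h (m * b + k)) else 0) = (\<Sum>k<m. WW (h (m * b + k)))"
        by simp
    qed
    also have "\<dots> = (\<Sum>i<m * B. WW (h i))" by (rule sum_blocks)
    finally show ?thesis using Wj sub[OF j] le0 by linarith
  next
    case True
    define t where "t = (LEAST b. ?g b)"
    obtain b0 where b0: "b0 < B" "?g b0" using True by blast
    have gt: "?g t" unfolding t_def using b0(2) by (rule LeastI)
    have "t \<le> b0" unfolding t_def using b0(2) by (rule Least_le)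
    then have tB: "t < B" using b0(1) by linarith
    have nt: "\<And>b. b < t \<Longrightarrow> \<not> ?g b" unfolding t_def by (rule not_less_Least)
    have "?S = (\<Sum>b<B. if b < Suc t then (\<Sum>k<m. WW (h (m * b + k))) else 0)"
    proof (intro sum.cong refl)
      fix b assume "b \<in> {..<B}"
      have "(\<forall>b'<b. \<not> ?g b') \<longleftrightarrow> b < Suc t"
      proof
        assume "\<forall>b'<b. \<not> ?g b'"
        then have "\<not> t < b" using gt by blast
        then show "b < Suc t" by simp
      next
        assume "b < Suc t"
        then show "\<forall>b'<b. \<not> ?g b'" using nt by auto
      qed
      then show "(if \<forall>b'<b. \<not> ?g b' then \<Sum>k<m. WW (h (m * b + k)) else 0)
          = (if b < Suc t then \<Sum>k<m. WW (h (m * b + k)) else 0)" by simp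
    qed
    also have "\<dots> = (\<Sum>b\<in>{..<B} \<inter> {b. b < Suc t}. \<Sum>k<m. WW (h (m * b + k)))"
      by (subst sum.inter_restrict) auto
    also have "{..<B} \<inter> {b. b < Suc t} = {..<Suc t}" using tB by auto
    also have "(\<Sum>b<Suc t. \<Sum>k<m. WW (h (m * b + k))) = (\<Sum>i<m * Suc t. WW (h i))"
      by (rule sum_blocks)
    finally have S: "?S = (\<Sum>i<m * Suc t. WW (h i))" .
    show ?thesis
    proof (cases "j \<le> m * Suc t")
      case True
      then show ?thesis using S Wj sub[OF True] le0 by linarith
    next
      case False
      define r where "r = j - (m * t + m)"
      have r: "j = (m * t + m) + r" using False unfolding r_def by simp
      define H where "H = lprod (\<lambda>k. h (m * t + m + k)) r"
      define Bk where "Bk = lprod (\<lambda>k. h (m * t + k)) m"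
      define G where "G = lprod h (m * t)"
      have e1: "lprod h j = H ** lprod h (m * t + m)"
        unfolding r H_def by (rule lprod_add)
      have e2: "lprod h (m * t + m) = Bk ** G"
        unfolding Bk_def G_def by (rule lprod_add)
      have "lprod h j = H ** (Bk ** G)" using e1 e2 by simp
      also have "\<dots> = (H ** Bk) ** G" by (simp add: matrix_mul_assoc)
      finally have eq: "lprod h j = (H ** Bk) ** G" .
      have aH: "allowable H" "allowable Bk" "allowable G"
        unfolding H_def Bk_def G_def using al by (auto intro: lprod_allowable)
      have "WW (lprod h j) \<le> WW (H ** Bk) + WW G"
        unfolding eq by (intro WW_mult allowable_mult aH)
      also have "WW (H ** Bk) \<le> - 2 * ln e"
        using gt e aH unfolding Bk_def by (intro WW_reset) auto
      also have "WW G \<le> (\<Sum>i<m * t. WW (h i))" unfolding G_def using al by (intro WW_lprod) auto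
      also have "\<dots> \<le> (\<Sum>i<m * Suc t. WW (h i))" by (intro sub) simp
      finally show ?thesis using S by linarith
    qed
  qed
qed



lemma cont_mmult: "continuous_on UNIV (\<lambda>x::((real^'n^'n) \<times> (real^'n^'n)). fst x ** snd x)"
  unfolding matrix_matrix_mult_def by (intro continuous_intros)

lemma meas_mmult[measurable]:
  fixes f g :: "'a \<Rightarrow> real^'n^'n"
  shows "f \<in> borel_measurable N \<Longrightarrow> g \<in> borel_measurable N \<Longrightarrow> (\<lambda>\<omega>. f \<omega> ** g \<omega>) \<in> borel_measurable N"
  by (rule borel_measurable_continuous_Pair[OF _ _ cont_mmult])

lemma meas_lprod:
  fixes h :: "nat \<Rightarrow> 'a \<Rightarrow> real^'n^'n"
  shows "(\<And>k. k < n \<Longrightarrow> (\<lambda>\<omega>. h k \<omega>) \<in> borel_measurable N) \<Longrightarrow> (\<lambda>\<omega>. lprod (\<lambda>k. h k \<omega>) n) \<in> borel_measurable N"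
  by (induction n) auto

lemma meas_entry[measurable]: "(\<lambda>A::real^'n^'n. A $ i $ j) \<in> borel_measurable borel"
  by (intro borel_measurable_continuous_onI continuous_intros)

lemma meas_csum[measurable]: "(\<lambda>A::real^'n^'n. csum A j) \<in> borel_measurable borel"
  unfolding csum_def by measurable

lemma meas_maxc[measurable]: "(maxc :: real^'n^'n \<Rightarrow> real) \<in> borel_measurable borel"
proof -
  have "(\<lambda>A::real^'n^'n. Max ((\<lambda>j. csum A j) ` UNIV)) \<in> borel_measurable borel"
    by (intro borel_measurable_Max) auto
  then show ?thesis unfolding maxc_def by simp
qed

lemma meas_minc[measurable]: "(minc :: real^'n^'n \<Rightarrow> real) \<in> borel_measurable borel"
proof -
  have "(\<lambda>A::real^'n^'n. Min ((\<lambda>j. csum A j) ` UNIV)) \<in> borel_measurable borel"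
    by (intro borel_measurable_Min) auto
  then show ?thesis unfolding minc_def by simp
qed

lemma meas_WW[measurable]: "(WW :: real^'n^'n \<Rightarrow> real) \<in> borel_measurable borel"
  unfolding WW_def[abs_def] by measurable

lemma meas_good[measurable]: "Measurable.pred borel (good e :: real^'n^'n \<Rightarrow> bool)"
  unfolding good_def[abs_def] by measurable

lemma meas_allowable[measurable]: "Measurable.pred borel (allowable :: real^'n^'n \<Rightarrow> bool)"
  unfolding allowable_def[abs_def] by measurable

lemma meas_l1mv[measurable]: "(\<lambda>A::real^'n^'n. l1 (A *v x)) \<in> borel_measurable borel"
  unfolding l1_def matrix_vector_mult_def
  by (intro borel_measurable_continuous_onI continuous_intros)



lemma (in prob_space) indep_sets_reindex:
  assumes "indep_sets F I" "inj_on f J" "f ` J \<subseteq> I"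
  shows "indep_sets (\<lambda>j. F (f j)) J"
proof -
  from assms(1) have ev: "\<forall>i\<in>I. F i \<subseteq> events"
    and ind: "\<And>K A. K \<subseteq> I \<Longrightarrow> K \<noteq> {} \<Longrightarrow> finite K \<Longrightarrow> A \<in> Pi K F \<Longrightarrow> prob (\<Inter>j\<in>K. A j) = (\<Prod>j\<in>K. prob (A j))"
    unfolding indep_sets_def by auto
  show ?thesis unfolding indep_sets_def
  proof (intro conjI ballI allI impI)
    fix j assume "j \<in> J" then show "F (f j) \<subseteq> events" using ev assms(3) by auto
  next
    fix L A assume L: "L \<subseteq> J" "L \<noteq> {}" "finite L" and A: "A \<in> Pi L (\<lambda>j. F (f j))"
    define A' where "A' i = A (the_inv_into L f i)" for i
    have inj: "inj_on f L" using assms(2) L(1) inj_on_subset by blast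
    have A'f: "\<And>j. j \<in> L \<Longrightarrow> A' (f j) = A j" unfolding A'_def using the_inv_into_f_f[OF inj] by simp
    have "A' \<in> Pi (f ` L) F" using A A'f by auto
    then have "prob (\<Inter>i\<in>f`L. A' i) = (\<Prod>i\<in>f`L. prob (A' i))" using L assms(3) by (intro ind) auto
    moreover have "(\<Inter>i\<in>f`L. A' i) = (\<Inter>j\<in>L. A j)" using A'f by auto
    moreover have "(\<Prod>i\<in>f`L. prob (A' i)) = (\<Prod>j\<in>L. prob (A j))"
    proof -
      have "(\<Prod>i\<in>f`L. prob (A' i)) = (\<Prod>j\<in>L. prob (A' (f j)))" by (simp add: prod.reindex[OF inj])
      also have "\<dots> = (\<Prod>j\<in>L. prob (A j))" using A'f by (intro prod.cong) auto
      finally show ?thesis .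
    qed
    ultimately show "prob (\<Inter>j\<in>L. A j) = (\<Prod>j\<in>L. prob (A j))" by simp
  qed
qed

lemma (in prob_space) indep_vars_reindex:
  assumes "indep_vars M' X I" "inj_on f J" "f ` J \<subseteq> I"
  shows "indep_vars (\<lambda>j. M' (f j)) (\<lambda>j. X (f j)) J"
proof -
  have "indep_sets (\<lambda>i. sigma_sets (space M) {X i -` A \<inter> space M | A. A \<in> sets (M' i)}) I"
    using assms(1) unfolding indep_vars_def by blast
  from indep_sets_reindex[OF this assms(2,3)]
  show ?thesis using assms unfolding indep_vars_def by auto
qed

lemma block_law:
  fixes g :: "nat \<Rightarrow> 'w \<Rightarrow> 'b::topological_space"
  assumes P: "prob_space M" and indep: "prob_space.indep_vars M (\<lambda>_. borel) g UNIV"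
    and law: "\<And>k. distr M borel (g k) = \<mu>" and m: "0 < m"
  shows "distr M (PiM {..<m} (\<lambda>_. borel)) (\<lambda>\<omega>. \<lambda>k\<in>{..<m}. g (s + k) \<omega>) = PiM {..<m} (\<lambda>_. \<mu>)"
proof -
  interpret prob_space M by (rule P)
  have ind: "indep_vars (\<lambda>_. borel) (\<lambda>k. g (s + k)) {..<m}"
    using indep_vars_reindex[OF indep, of "\<lambda>k. s + k" "{..<m}"] by (simp add: inj_on_def)
  have rv: "\<And>k. k \<in> {..<m} \<Longrightarrow> random_variable borel (g (s + k))"
    using indep unfolding indep_vars_def by auto
  have ne: "{..<m} \<noteq> {}" using m by auto
  have "indep_vars (\<lambda>_. borel) (\<lambda>k. g (s + k)) {..<m} \<longleftrightarrow>
     distr M (PiM {..<m} (\<lambda>_. borel)) (\<lambda>\<omega>. \<lambda>k\<in>{..<m}. g (s + k) \<omega>) = PiM {..<m} (\<lambda>k. distr M borel (g (s + k)))"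
    by (rule indep_vars_iff_distr_eq_PiM'[OF ne]) (rule rv)
  with ind show ?thesis using law by simp
qed

lemma block_prob:
  fixes g :: "nat \<Rightarrow> 'w \<Rightarrow> real^'n^'n"
  assumes P: "prob_space M" and indep: "prob_space.indep_vars M (\<lambda>_. borel) g UNIV"
    and law: "\<And>k. distr M borel (g k) = \<mu>" and m: "0 < m"
  shows "measure M {\<omega> \<in> space M. good e (lprod (\<lambda>k. g (s + k) \<omega>) m)}
       = measure (PiM {..<m} (\<lambda>_. \<mu>)) {f \<in> space (PiM {..<m} (\<lambda>_. borel)). good e (lprod f m)}"
proof -
  interpret prob_space M by (rule P)
  have rv: "\<And>k. random_variable borel (g k)"
    using indep unfolding indep_vars_def by auto
  let ?X = "\<lambda>\<omega>. \<lambda>k\<in>{..<m}. g (s + k) \<omega>"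
  have Xm: "?X \<in> measurable M (PiM {..<m} (\<lambda>_. borel))"
    using rv by (intro measurable_restrict) auto
  have lm: "(\<lambda>f. lprod (\<lambda>k. f k) m) \<in> borel_measurable (PiM {..<m} (\<lambda>_. borel :: (real^'n^'n) measure))"
    by (rule meas_lprod) (auto intro!: measurable_component_singleton)
  have S: "{f \<in> space (PiM {..<m} (\<lambda>_. borel)). good e (lprod f m)} \<in> sets (PiM {..<m} (\<lambda>_. borel :: (real^'n^'n) measure))"
    using measurable_compose[OF lm meas_good[of e]] by (simp add: pred_def)
  have "measure (PiM {..<m} (\<lambda>_. \<mu>)) {f \<in> space (PiM {..<m} (\<lambda>_. borel)). good e (lprod f m)}
      = measure M (?X -` {f \<in> space (PiM {..<m} (\<lambda>_. borel)). good e (lprod f m)} \<inter> space M)"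
    unfolding block_law[OF P indep law m, of s, symmetric] by (rule measure_distr[OF Xm S])
  also have "?X -` {f \<in> space (PiM {..<m} (\<lambda>_. borel)). good e (lprod f m)} \<inter> space M
      = {\<omega> \<in> space M. good e (lprod (\<lambda>k. g (s + k) \<omega>) m)}"
  proof -
    have "\<And>\<omega>. lprod (?X \<omega>) m = lprod (\<lambda>k. g (s + k) \<omega>) m" by (rule lprod_cong) auto
    moreover have "\<And>\<omega>. ?X \<omega> \<in> space (PiM {..<m} (\<lambda>_. borel :: (real^'n^'n) measure))"
      by (auto simp: space_PiM)
    ultimately show ?thesis by auto
  qed
  finally show ?thesis by simp
qed



definition blk :: "(nat \<Rightarrow> real^'n^'n) \<Rightarrow> nat \<Rightarrow> nat \<Rightarrow> real^'n^'n" where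
  "blk h m b = lprod (\<lambda>k. h (m * b + k)) m"

definition Yb :: "(nat \<Rightarrow> real^'n^'n) \<Rightarrow> nat \<Rightarrow> nat \<Rightarrow> real" where
  "Yb h m b = (\<Sum>k<m. WW (h (m * b + k)))"

definition ab :: "real \<Rightarrow> (nat \<Rightarrow> real^'n^'n) \<Rightarrow> nat \<Rightarrow> nat \<Rightarrow> real" where
  "ab e h m b = (if \<forall>b'<b. \<not> good e (blk h m b') then Yb h m b else 0)"

definition ZZ :: "real \<Rightarrow> (nat \<Rightarrow> real^'n^'n) \<Rightarrow> nat \<Rightarrow> nat \<Rightarrow> real" where
  "ZZ e h m n = - 2 * ln e + (\<Sum>b<n. ab e h m b)"

lemma WW_ZZ:
  fixes h :: "nat \<Rightarrow> real^'n^'n"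
  assumes "\<And>k. allowable (h k)" "0 < e" "e \<le> 1" "j \<le> m * B"
  shows "WW (lprod h j) \<le> ZZ e h m B"
  using WW_blocks[OF assms] unfolding ZZ_def ab_def Yb_def blk_def .

lemma ab_sq_bound:
  fixes g :: "nat \<Rightarrow> 'w \<Rightarrow> real^'n^'n"
  assumes P: "prob_space M" and indep: "prob_space.indep_vars M (\<lambda>_. borel) g UNIV"
    and law: "\<And>k. distr M borel (g k) = \<mu>" and m: "0 < m"
    and pg: "\<And>s. measure M {\<omega> \<in> space M. good e (lprod (\<lambda>k. g (s + k) \<omega>) m)} = p"
    and K0: "integrable \<mu> (\<lambda>A. (WW A)\<^sup>2)"
  shows "integrable M (\<lambda>\<omega>. (ab e (\<lambda>k. g k \<omega>) m b)\<^sup>2)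
     \<and> (\<integral>\<omega>. (ab e (\<lambda>k. g k \<omega>) m b)\<^sup>2 \<partial>M) \<le> (1 - p) ^ b * (real m * real m * (\<integral>A. (WW A)\<^sup>2 \<partial>\<mu>))"
proof -
  interpret prob_space M by (rule P)
  have gm[measurable]: "\<And>k. g k \<in> borel_measurable M"
    using indep unfolding indep_vars_def by auto
  define K where "K b' = {m * b' ..< m * b' + m}" for b'
  have Kin: "\<And>b' k. k < m \<Longrightarrow> m * b' + k \<in> K b'" unfolding K_def by auto
  have disj: "disjoint_family_on K UNIV"
    unfolding disjoint_family_on_def
  proof (intro ballI impI)
    fix b1 b2 :: nat assume "b1 \<noteq> b2"
    show "K b1 \<inter> K b2 = {}"
    proof (rule ccontr)
      assume "K b1 \<inter> K b2 \<noteq> {}"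
      then obtain i where "i \<in> K b1" "i \<in> K b2" by blast
      then have i: "m * b1 \<le> i" "i < m * b1 + m" "m * b2 \<le> i" "i < m * b2 + m"
        unfolding K_def by auto
      have "m * b1 < m * (b2 + 1)" "m * b2 < m * (b1 + 1)" using i by (auto simp: algebra_simps)
      then have "b1 < b2 + 1" "b2 < b1 + 1"
        using mult_le_mono2[of "b2 + 1" b1 m] mult_le_mono2[of "b1 + 1" b2 m] by linarith+
      then show False using \<open>b1 \<noteq> b2\<close> by simp
    qed
  qed
  have indR: "indep_vars (\<lambda>b'. PiM (K b') (\<lambda>_. borel)) (\<lambda>b' \<omega>. restrict (\<lambda>i. g i \<omega>) (K b')) UNIV"
    by (rule indep_vars_restrict[OF indep _ disj]) auto
  define \<phi> where "\<phi> b' f = (if b' < b then (if good e (lprod (\<lambda>k. f (m * b' + k)) m) then 0 else 1)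
      else (\<Sum>k<m. WW (f (m * b' + k)))\<^sup>2 :: real)" for b' and f :: "nat \<Rightarrow> real^'n^'n"
  have \<phi>m: "\<phi> b' \<in> borel_measurable (PiM (K b') (\<lambda>_. borel))" for b'
  proof -
    have c: "\<And>k. k < m \<Longrightarrow> (\<lambda>f. f (m * b' + k)) \<in> borel_measurable (PiM (K b') (\<lambda>_. borel :: (real^'n^'n) measure))"
      using Kin by (intro measurable_component_singleton) auto
    have l: "(\<lambda>f. lprod (\<lambda>k. f (m * b' + k)) m) \<in> borel_measurable (PiM (K b') (\<lambda>_. borel :: (real^'n^'n) measure))"
      by (rule meas_lprod) (rule c)
    have gp: "Measurable.pred (PiM (K b') (\<lambda>_. borel :: (real^'n^'n) measure)) (\<lambda>f. good e (lprod (\<lambda>k. f (m * b' + k)) m))"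
      by (rule measurable_compose[OF l meas_good])
    have s: "(\<lambda>f. (\<Sum>k<m. WW (f (m * b' + k)))) \<in> borel_measurable (PiM (K b') (\<lambda>_. borel :: (real^'n^'n) measure))"
      by (intro borel_measurable_sum measurable_compose[OF c meas_WW]) auto
    show ?thesis
    proof (cases "b' < b")
      case True
      have "(\<lambda>f::nat \<Rightarrow> real^'n^'n. if good e (lprod (\<lambda>k. f (m * b' + k)) m) then 0 else 1 :: real) \<in> borel_measurable (PiM (K b') (\<lambda>_. borel))"
        using gp by (intro measurable_If) (auto simp: pred_def)
      then show ?thesis using True unfolding \<phi>_def[abs_def] by simp
    next
      case False
      have "(\<lambda>f::nat \<Rightarrow> real^'n^'n. (\<Sum>k<m. WW (f (m * b' + k)))\<^sup>2) \<in> borel_measurable (PiM (K b') (\<lambda>_. borel :: (real^'n^'n) measure))"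
        using s by (intro borel_measurable_power)
      then show ?thesis using False unfolding \<phi>_def[abs_def] by simp
    qed
  qed
  define V where "V b' \<omega> = \<phi> b' (restrict (\<lambda>i. g i \<omega>) (K b'))" for b' \<omega>
  have indV: "indep_vars (\<lambda>_. borel) V {..b}"
    using indep_vars_subset[OF indep_vars_compose2[OF indR \<phi>m]] unfolding V_def by auto
  have V1: "V b' \<omega> = (if good e (blk (\<lambda>k. g k \<omega>) m b') then 0 else 1)" if "b' < b" for b' \<omega>
  proof -
    have "lprod (\<lambda>k. restrict (\<lambda>i. g i \<omega>) (K b') (m * b' + k)) m = blk (\<lambda>k. g k \<omega>) m b'"
      unfolding blk_def using Kin by (intro lprod_cong) auto
    then show ?thesis using that unfolding V_def \<phi>_def by simp
  qed
  have V2: "V b \<omega> = (Yb (\<lambda>k. g k \<omega>) m b)\<^sup>2" for \<omega>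
  proof -
    have "(\<Sum>k<m. WW (restrict (\<lambda>i. g i \<omega>) (K b) (m * b + k))) = Yb (\<lambda>k. g k \<omega>) m b"
      unfolding Yb_def using Kin by (intro sum.cong) auto
    then show ?thesis unfolding V_def \<phi>_def by simp
  qed
  have abeq: "(ab e (\<lambda>k. g k \<omega>) m b)\<^sup>2 = (\<Prod>b'\<in>{..b}. V b' \<omega>)" for \<omega>
  proof -
    have "(\<Prod>b'\<in>{..b}. V b' \<omega>) = (\<Prod>b'<b. V b' \<omega>) * V b \<omega>"
      by (simp add: lessThan_Suc_atMost[symmetric])
    also have "\<dots> = (\<Prod>b'<b. (if good e (blk (\<lambda>k. g k \<omega>) m b') then 0 else 1)) * (Yb (\<lambda>k. g k \<omega>) m b)\<^sup>2"
      using V1 V2 by simp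
    also have "\<dots> = (ab e (\<lambda>k. g k \<omega>) m b)\<^sup>2"
    proof (cases "\<forall>b'<b. \<not> good e (blk (\<lambda>k. g k \<omega>) m b')")
      case True
      then show ?thesis unfolding ab_def by simp
    next
      case False
      then obtain b' where "b' < b" "good e (blk (\<lambda>k. g k \<omega>) m b')" by blast
      then have "(\<Prod>b'<b. (if good e (blk (\<lambda>k. g k \<omega>) m b') then 0 else 1 :: real)) = 0"
        by (intro prod_zero) auto
      then show ?thesis using False unfolding ab_def by simp
    qed
    finally show ?thesis by simp
  qed
  have Wg: "\<And>i. integrable M (\<lambda>\<omega>. (WW (g i \<omega>))\<^sup>2)"
    using K0 law integrable_distr_eq[OF gm, of "\<lambda>A. (WW A)\<^sup>2"] by auto
  have Wg_int: "\<And>i. (\<integral>\<omega>. (WW (g i \<omega>))\<^sup>2 \<partial>M) = (\<integral>A. (WW A)\<^sup>2 \<partial>\<mu>)"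
    using law integral_distr[OF gm, of "\<lambda>A. (WW A)\<^sup>2"] by auto
  have Ybm: "(\<lambda>\<omega>. Yb (\<lambda>k. g k \<omega>) m b) \<in> borel_measurable M"
    unfolding Yb_def by measurable
  have Ysq: "(Yb (\<lambda>k. g k \<omega>) m b)\<^sup>2 \<le> real m * (\<Sum>k<m. (WW (g (m * b + k) \<omega>))\<^sup>2)" for \<omega>
    using sum_squared_le_sum_of_squares[of "\<lambda>k. WW (g (m * b + k) \<omega>)" "{..<m}"]
    unfolding Yb_def by (simp add: mult.commute)
  have Rint: "integrable M (\<lambda>\<omega>. real m * (\<Sum>k<m. (WW (g (m * b + k) \<omega>))\<^sup>2))"
    using Wg by auto
  have Yint: "integrable M (\<lambda>\<omega>. (Yb (\<lambda>k. g k \<omega>) m b)\<^sup>2)"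
  proof (rule Bochner_Integration.integrable_bound[OF Rint])
    show "(\<lambda>\<omega>. (Yb (\<lambda>k. g k \<omega>) m b)\<^sup>2) \<in> borel_measurable M" using Ybm by measurable
    show "AE \<omega> in M. norm ((Yb (\<lambda>k. g k \<omega>) m b)\<^sup>2) \<le> norm (real m * (\<Sum>k<m. (WW (g (m * b + k) \<omega>))\<^sup>2))"
    proof (rule AE_I2)
      fix \<omega>
      have "norm ((Yb (\<lambda>k. g k \<omega>) m b)\<^sup>2) = (Yb (\<lambda>k. g k \<omega>) m b)\<^sup>2" by simp
      also have "\<dots> \<le> real m * (\<Sum>k<m. (WW (g (m * b + k) \<omega>))\<^sup>2)" by (rule Ysq)
      also have "\<dots> \<le> norm (real m * (\<Sum>k<m. (WW (g (m * b + k) \<omega>))\<^sup>2))" by simp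
      finally show "norm ((Yb (\<lambda>k. g k \<omega>) m b)\<^sup>2) \<le> norm (real m * (\<Sum>k<m. (WW (g (m * b + k) \<omega>))\<^sup>2))" .
    qed
  qed
  have blkm: "\<And>b'. (\<lambda>\<omega>. blk (\<lambda>k. g k \<omega>) m b') \<in> borel_measurable M"
    unfolding blk_def by (rule meas_lprod) simp
  have gpm: "\<And>b'. Measurable.pred M (\<lambda>\<omega>. good e (blk (\<lambda>k. g k \<omega>) m b'))"
    by (rule measurable_compose[OF blkm meas_good])
  have Vint: "integrable M (V b')" if "b' \<in> {..b}" for b'
  proof (cases "b' < b")
    case True
    have "(\<lambda>\<omega>. if good e (blk (\<lambda>k. g k \<omega>) m b') then 0 else 1 :: real) \<in> borel_measurable M"
      using gpm[of b'] by (intro measurable_If) (auto simp: pred_def)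
    then have "integrable M (\<lambda>\<omega>. if good e (blk (\<lambda>k. g k \<omega>) m b') then 0 else 1 :: real)"
      by (intro integrable_const_bound[where B=1]) auto
    moreover have "V b' = (\<lambda>\<omega>. if good e (blk (\<lambda>k. g k \<omega>) m b') then 0 else 1 :: real)"
      using V1[OF True] by auto
    ultimately show ?thesis by simp
  next
    case False
    then have "b' = b" using that by auto
    moreover have "V b = (\<lambda>\<omega>. (Yb (\<lambda>k. g k \<omega>) m b)\<^sup>2)" using V2 by auto
    ultimately show ?thesis using Yint by simp
  qed
  have Vexp: "(\<integral>\<omega>. V b' \<omega> \<partial>M) = 1 - p" if "b' < b" for b'
  proof -
    define S where "S = {\<omega> \<in> space M. good e (blk (\<lambda>k. g k \<omega>) m b')}"
    have S: "S \<in> sets M" unfolding S_def using gpm[of b'] by (simp add: pred_def)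
    have "(\<integral>\<omega>. V b' \<omega> \<partial>M) = (\<integral>\<omega>. indicator (space M - S) \<omega> \<partial>M)"
      using V1[OF that] by (intro Bochner_Integration.integral_cong) (auto simp: S_def split: split_indicator)
    also have "\<dots> = prob (space M - S)"
      by (simp add: Int_absorb2 Diff_subset)
    also have "\<dots> = 1 - prob S" using S by (rule prob_compl)
    also have "prob S = p" unfolding S_def blk_def using pg[of "m * b'"] by simp
    finally show ?thesis .
  qed
  have Yexp: "(\<integral>\<omega>. (Yb (\<lambda>k. g k \<omega>) m b)\<^sup>2 \<partial>M) \<le> real m * real m * (\<integral>A. (WW A)\<^sup>2 \<partial>\<mu>)"
  proof -
    have "(\<integral>\<omega>. (Yb (\<lambda>k. g k \<omega>) m b)\<^sup>2 \<partial>M) \<le> (\<integral>\<omega>. real m * (\<Sum>k<m. (WW (g (m * b + k) \<omega>))\<^sup>2) \<partial>M)"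
      by (intro integral_mono Yint Rint Ysq)
    also have "\<dots> = real m * (\<Sum>k<m. (\<integral>\<omega>. (WW (g (m * b + k) \<omega>))\<^sup>2 \<partial>M))"
      using Wg by simp
    also have "\<dots> = real m * real m * (\<integral>A. (WW A)\<^sup>2 \<partial>\<mu>)"
      using Wg_int by simp
    finally show ?thesis .
  qed
  have "(\<integral>\<omega>. (ab e (\<lambda>k. g k \<omega>) m b)\<^sup>2 \<partial>M) = (\<integral>\<omega>. (\<Prod>b'\<in>{..b}. V b' \<omega>) \<partial>M)"
    using abeq by simp
  also have "\<dots> = (\<Prod>b'\<in>{..b}. (\<integral>\<omega>. V b' \<omega> \<partial>M))"
    by (rule indep_vars_lebesgue_integral[OF finite_atMost indV Vint])
  also have "\<dots> = (\<Prod>b'<b. (\<integral>\<omega>. V b' \<omega> \<partial>M)) * (\<integral>\<omega>. V b \<omega> \<partial>M)"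
    by (simp add: lessThan_Suc_atMost[symmetric])
  also have "\<dots> = (1 - p) ^ b * (\<integral>\<omega>. (Yb (\<lambda>k. g k \<omega>) m b)\<^sup>2 \<partial>M)"
    using Vexp V2 by simp
  also have "\<dots> \<le> (1 - p) ^ b * (real m * real m * (\<integral>A. (WW A)\<^sup>2 \<partial>\<mu>))"
  proof (rule mult_left_mono[OF Yexp])
    have "p \<le> 1" using prob_le_1[of "{\<omega> \<in> space M. good e (lprod (\<lambda>k. g (0 + k) \<omega>) m)}"] pg[of 0] by linarith
    then show "0 \<le> (1 - p) ^ b" by simp
  qed
  finally have bound: "(\<integral>\<omega>. (ab e (\<lambda>k. g k \<omega>) m b)\<^sup>2 \<partial>M) \<le> (1 - p) ^ b * (real m * real m * (\<integral>A. (WW A)\<^sup>2 \<partial>\<mu>))" .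
  have "integrable M (\<lambda>\<omega>. (\<Prod>b'\<in>{..b}. V b' \<omega>))"
    by (rule indep_vars_integrable[OF finite_atMost indV Vint])
  then have "integrable M (\<lambda>\<omega>. (ab e (\<lambda>k. g k \<omega>) m b)\<^sup>2)" using abeq by simp
  with bound show ?thesis by blast
qed



lemma geom_le:
  fixes r :: real
  assumes "0 \<le> r" "r < 1"
  shows "(\<Sum>b<n. r ^ b) \<le> 1 / (1 - r)"
proof -
  have "(\<Sum>b<n. r ^ b) = (1 - r ^ n) / (1 - r)" using assms by (simp add: sum_gp_strict)
  also have "\<dots> \<le> 1 / (1 - r)" using assms by (intro divide_right_mono) auto
  finally show ?thesis .
qed

lemma weighted_cs:
  fixes a :: "nat \<Rightarrow> real"
  assumes q: "0 < q" "q < 1"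
  shows "(\<Sum>b<n. a b)\<^sup>2 \<le> 1 / (1 - q) * (\<Sum>b<n. (a b)\<^sup>2 / q ^ b)"
proof -
  have "(\<Sum>b<n. a b) = (\<Sum>b<n. sqrt (q ^ b) * (a b / sqrt (q ^ b)))"
    using q by (intro sum.cong) auto
  then have "(\<Sum>b<n. a b)\<^sup>2 \<le> (\<Sum>b<n. (sqrt (q ^ b))\<^sup>2) * (\<Sum>b<n. (a b / sqrt (q ^ b))\<^sup>2)"
    using Cauchy_Schwarz_ineq_sum[of "\<lambda>b. sqrt (q ^ b)" "\<lambda>b. a b / sqrt (q ^ b)" "{..<n}"] by simp
  also have "(\<Sum>b<n. (sqrt (q ^ b))\<^sup>2) = (\<Sum>b<n. q ^ b)" using q by simp
  also have "(\<Sum>b<n. (a b / sqrt (q ^ b))\<^sup>2) = (\<Sum>b<n. (a b)\<^sup>2 / q ^ b)"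
    using q by (simp add: power_divide)
  also have "(\<Sum>b<n. q ^ b) * (\<Sum>b<n. (a b)\<^sup>2 / q ^ b) \<le> 1 / (1 - q) * (\<Sum>b<n. (a b)\<^sup>2 / q ^ b)"
    using q by (intro mult_right_mono geom_le sum_nonneg) auto
  finally show ?thesis .
qed

lemma main_bound:
  fixes g :: "nat \<Rightarrow> 'w \<Rightarrow> real^'n^'n"
  assumes P: "prob_space M" and indep: "prob_space.indep_vars M (\<lambda>_. borel) g UNIV"
    and law: "\<And>k. distr M borel (g k) = \<mu>" and m: "0 < m" and e: "0 < e"
    and pg: "\<And>s. measure M {\<omega> \<in> space M. good e (lprod (\<lambda>k. g (s + k) \<omega>) m)} = p"
    and p: "0 < p"
    and K0: "integrable \<mu> (\<lambda>A. (WW A)\<^sup>2)"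
  shows "\<exists>K. \<forall>n. integrable M (\<lambda>\<omega>. (ZZ e (\<lambda>k. g k \<omega>) m n)\<^sup>2)
      \<and> (\<integral>\<omega>. (ZZ e (\<lambda>k. g k \<omega>) m n)\<^sup>2 \<partial>M) \<le> K"
proof -
  interpret prob_space M by (rule P)
  have gm[measurable]: "\<And>k. g k \<in> borel_measurable M"
    using indep unfolding indep_vars_def by auto
  have p1: "p \<le> 1" using prob_le_1[of "{\<omega> \<in> space M. good e (lprod (\<lambda>k. g (0 + k) \<omega>) m)}"] pg[of 0]
    by linarith
  define C where "C = (\<integral>A. (WW A)\<^sup>2 \<partial>\<mu>)"
  define c0 where "c0 = - 2 * ln e"
  define q where "q = 1 - p / 2"
  define r where "r = (1 - p) / q"
  have q: "0 < q" "q < 1" using p p1 by (auto simp: q_def)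
  have r: "0 \<le> r" "r < 1" using p p1 q by (auto simp: r_def q_def field_simps)
  define K where "K = 2 * c0\<^sup>2 + 2 * (1 / (1 - q)) * (real m * real m * C * (1 / (1 - r)))"
  note abb = ab_sq_bound[OF P indep law m pg K0]
  have blkm[measurable]: "\<And>b'. (\<lambda>\<omega>. blk (\<lambda>k. g k \<omega>) m b') \<in> borel_measurable M"
    unfolding blk_def by (rule meas_lprod) simp
  have gpm[measurable]: "\<And>b'. Measurable.pred M (\<lambda>\<omega>. good e (blk (\<lambda>k. g k \<omega>) m b'))"
    by (rule measurable_compose[OF blkm meas_good])
  have abm[measurable]: "\<And>b. (\<lambda>\<omega>. ab e (\<lambda>k. g k \<omega>) m b) \<in> borel_measurable M"
    unfolding ab_def Yb_def by measurable
  have C0: "0 \<le> C" unfolding C_def by simp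
  show ?thesis
  proof (intro exI allI conjI)
    fix n
    define R where "R \<omega> = 2 * c0\<^sup>2 + 2 * (1 / (1 - q) * (\<Sum>b<n. (ab e (\<lambda>k. g k \<omega>) m b)\<^sup>2 / q ^ b))" for \<omega>
    have pw: "(ZZ e (\<lambda>k. g k \<omega>) m n)\<^sup>2 \<le> R \<omega>" for \<omega>
    proof -
      define S where "S = (\<Sum>b<n. ab e (\<lambda>k. g k \<omega>) m b)"
      have "(ZZ e (\<lambda>k. g k \<omega>) m n)\<^sup>2 = (c0 + S)\<^sup>2" unfolding ZZ_def S_def c0_def by simp
      also have "\<dots> \<le> 2 * c0\<^sup>2 + 2 * S\<^sup>2"
        using zero_le_power2[of "c0 - S"] by (simp add: power2_eq_square algebra_simps)
      also have "S\<^sup>2 \<le> 1 / (1 - q) * (\<Sum>b<n. (ab e (\<lambda>k. g k \<omega>) m b)\<^sup>2 / q ^ b)"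
        unfolding S_def by (rule weighted_cs[OF q])
      finally show ?thesis unfolding R_def by simp
    qed
    have Rint: "integrable M R"
      unfolding R_def using abb by auto
    show int: "integrable M (\<lambda>\<omega>. (ZZ e (\<lambda>k. g k \<omega>) m n)\<^sup>2)"
    proof (rule Bochner_Integration.integrable_bound[OF Rint])
      show "(\<lambda>\<omega>. (ZZ e (\<lambda>k. g k \<omega>) m n)\<^sup>2) \<in> borel_measurable M"
        unfolding ZZ_def by measurable
      show "AE \<omega> in M. norm ((ZZ e (\<lambda>k. g k \<omega>) m n)\<^sup>2) \<le> norm (R \<omega>)"
      proof (rule AE_I2)
        fix \<omega>
        have "norm ((ZZ e (\<lambda>k. g k \<omega>) m n)\<^sup>2) = (ZZ e (\<lambda>k. g k \<omega>) m n)\<^sup>2" by simp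
        also have "\<dots> \<le> R \<omega>" by (rule pw)
        also have "\<dots> \<le> norm (R \<omega>)" by simp
        finally show "norm ((ZZ e (\<lambda>k. g k \<omega>) m n)\<^sup>2) \<le> norm (R \<omega>)" .
      qed
    qed
    have "(\<integral>\<omega>. (ZZ e (\<lambda>k. g k \<omega>) m n)\<^sup>2 \<partial>M) \<le> (\<integral>\<omega>. R \<omega> \<partial>M)"
      by (intro integral_mono int Rint pw)
    also have "(\<integral>\<omega>. R \<omega> \<partial>M) = 2 * c0\<^sup>2 + 2 * (1 / (1 - q) * (\<Sum>b<n. (\<integral>\<omega>. (ab e (\<lambda>k. g k \<omega>) m b)\<^sup>2 \<partial>M) / q ^ b))"
      unfolding R_def using abb by (simp add: prob_space)
    finally have I1: "(\<integral>\<omega>. (ZZ e (\<lambda>k. g k \<omega>) m n)\<^sup>2 \<partial>M) \<le> 2 * c0\<^sup>2 + 2 * (1 / (1 - q) * (\<Sum>b<n. (\<integral>\<omega>. (ab e (\<lambda>k. g k \<omega>) m b)\<^sup>2 \<partial>M) / q ^ b))" .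
    have "(\<Sum>b<n. (\<integral>\<omega>. (ab e (\<lambda>k. g k \<omega>) m b)\<^sup>2 \<partial>M) / q ^ b) \<le> (\<Sum>b<n. r ^ b * (real m * real m * C))"
    proof (intro sum_mono)
      fix b
      have "(\<integral>\<omega>. (ab e (\<lambda>k. g k \<omega>) m b)\<^sup>2 \<partial>M) / q ^ b \<le> (1 - p) ^ b * (real m * real m * C) / q ^ b"
        using abb[of b] q by (intro divide_right_mono) (auto simp: C_def)
      also have "\<dots> = r ^ b * (real m * real m * C)" by (simp add: r_def power_divide)
      finally show "(\<integral>\<omega>. (ab e (\<lambda>k. g k \<omega>) m b)\<^sup>2 \<partial>M) / q ^ b \<le> r ^ b * (real m * real m * C)" .
    qed
    also have "(\<Sum>b<n. r ^ b * (real m * real m * C)) \<le> real m * real m * C * (1 / (1 - r))"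
    proof -
      have "(\<Sum>b<n. r ^ b * (real m * real m * C)) = (\<Sum>b<n. r ^ b) * (real m * real m * C)"
        by (simp add: sum_distrib_right)
      also have "\<dots> \<le> (1 / (1 - r)) * (real m * real m * C)"
        using geom_le[OF r, of n] C0 by (intro mult_right_mono) auto
      finally show ?thesis by simp
    qed
    finally have I2: "(\<Sum>b<n. (\<integral>\<omega>. (ab e (\<lambda>k. g k \<omega>) m b)\<^sup>2 \<partial>M) / q ^ b) \<le> real m * real m * C * (1 / (1 - r))" .
    have "1 / (1 - q) * (\<Sum>b<n. (\<integral>\<omega>. (ab e (\<lambda>k. g k \<omega>) m b)\<^sup>2 \<partial>M) / q ^ b) \<le> 1 / (1 - q) * (real m * real m * C * (1 / (1 - r)))"
      using q by (intro mult_left_mono I2) auto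
    then show "(\<integral>\<omega>. (ZZ e (\<lambda>k. g k \<omega>) m n)\<^sup>2 \<partial>M) \<le> K"
      using I1 unfolding K_def by linarith
  qed
qed



lemma finish:
  fixes F Z :: "'w \<Rightarrow> real"
  assumes P: "prob_space M" and Fm: "F \<in> borel_measurable M"
    and FZ: "AE \<omega> in M. \<bar>F \<omega>\<bar> \<le> Z \<omega>" and Zi: "integrable M (\<lambda>\<omega>. (Z \<omega>)\<^sup>2)"
    and ZK: "(\<integral>\<omega>. (Z \<omega>)\<^sup>2 \<partial>M) \<le> K" and h: "0 \<le> h" and K: "0 \<le> K"
    and cases: "(AE \<omega> in M. \<bar>F \<omega>\<bar> \<le> 6 * h) \<or> 1/2 \<le> h"
  shows "integrable M (\<lambda>\<omega>. \<bar>F \<omega>\<bar>) \<and> integrable M (\<lambda>\<omega>. (F \<omega>)\<^sup>2)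
    \<and> (\<integral>\<omega>. \<bar>F \<omega>\<bar> \<partial>M) \<le> sqrt (\<integral>\<omega>. (F \<omega>)\<^sup>2 \<partial>M)
    \<and> sqrt (\<integral>\<omega>. (F \<omega>)\<^sup>2 \<partial>M) \<le> (6 + 2 * sqrt K) * h"
proof -
  interpret prob_space M by (rule P)
  have F2: "integrable M (\<lambda>\<omega>. (F \<omega>)\<^sup>2)"
  proof (rule Bochner_Integration.integrable_bound[OF Zi])
    show "(\<lambda>\<omega>. (F \<omega>)\<^sup>2) \<in> borel_measurable M" using Fm by measurable
    show "AE \<omega> in M. norm ((F \<omega>)\<^sup>2) \<le> norm ((Z \<omega>)\<^sup>2)"
      using FZ
    proof (rule AE_mp, intro AE_I2 impI)
      fix \<omega> assume "\<bar>F \<omega>\<bar> \<le> Z \<omega>"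
      then have "\<bar>F \<omega>\<bar>\<^sup>2 \<le> (Z \<omega>)\<^sup>2" by (intro power_mono) auto
      then show "norm ((F \<omega>)\<^sup>2) \<le> norm ((Z \<omega>)\<^sup>2)" by simp
    qed
  qed
  have F1: "integrable M (\<lambda>\<omega>. \<bar>F \<omega>\<bar>)"
  proof (rule Bochner_Integration.integrable_bound[of M "\<lambda>\<omega>. 1 + (F \<omega>)\<^sup>2"])
    show "integrable M (\<lambda>\<omega>. 1 + (F \<omega>)\<^sup>2)" using F2 by simp
    show "(\<lambda>\<omega>. \<bar>F \<omega>\<bar>) \<in> borel_measurable M" using Fm by measurable
    show "AE \<omega> in M. norm \<bar>F \<omega>\<bar> \<le> norm (1 + (F \<omega>)\<^sup>2)"
    proof (rule AE_I2)
      fix \<omega>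
      have "\<bar>F \<omega>\<bar> \<le> 1 + (F \<omega>)\<^sup>2"
      proof (cases "\<bar>F \<omega>\<bar> \<le> 1")
        case True then show ?thesis using zero_le_power2[of "F \<omega>"] by linarith
      next
        case False
        then have "\<bar>F \<omega>\<bar> * 1 \<le> \<bar>F \<omega>\<bar> * \<bar>F \<omega>\<bar>" by (intro mult_left_mono) auto
        then show ?thesis by (simp add: power2_eq_square)
      qed
      then show "norm \<bar>F \<omega>\<bar> \<le> norm (1 + (F \<omega>)\<^sup>2)" by simp
    qed
  qed
  have J: "(\<integral>\<omega>. \<bar>F \<omega>\<bar> \<partial>M) \<le> sqrt (\<integral>\<omega>. (F \<omega>)\<^sup>2 \<partial>M)"
  proof -
    have "0 \<le> variance (\<lambda>\<omega>. \<bar>F \<omega>\<bar>)" by (rule variance_positive)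
    also have "variance (\<lambda>\<omega>. \<bar>F \<omega>\<bar>) = (\<integral>\<omega>. (F \<omega>)\<^sup>2 \<partial>M) - (\<integral>\<omega>. \<bar>F \<omega>\<bar> \<partial>M)\<^sup>2"
      using variance_eq[of "\<lambda>\<omega>. \<bar>F \<omega>\<bar>"] F1 F2 by simp
    finally show ?thesis by (intro real_le_rsqrt) simp
  qed
  have B: "sqrt (\<integral>\<omega>. (F \<omega>)\<^sup>2 \<partial>M) \<le> (6 + 2 * sqrt K) * h"
    using cases
  proof
    assume a: "AE \<omega> in M. \<bar>F \<omega>\<bar> \<le> 6 * h"
    have "(\<integral>\<omega>. (F \<omega>)\<^sup>2 \<partial>M) \<le> (\<integral>\<omega>. (6 * h)\<^sup>2 \<partial>M)"
    proof (rule integral_mono_AE[OF F2])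
      show "integrable M (\<lambda>\<omega>. (6 * h)\<^sup>2)" by simp
      show "AE \<omega> in M. (F \<omega>)\<^sup>2 \<le> (6 * h)\<^sup>2"
        using a
      proof (rule AE_mp, intro AE_I2 impI)
        fix \<omega> assume "\<bar>F \<omega>\<bar> \<le> 6 * h"
        then have "\<bar>F \<omega>\<bar>\<^sup>2 \<le> (6 * h)\<^sup>2" by (intro power_mono) auto
        then show "(F \<omega>)\<^sup>2 \<le> (6 * h)\<^sup>2" by simp
      qed
    qed
    then have "(\<integral>\<omega>. (F \<omega>)\<^sup>2 \<partial>M) \<le> (6 * h)\<^sup>2" by (simp add: prob_space)
    then have "sqrt (\<integral>\<omega>. (F \<omega>)\<^sup>2 \<partial>M) \<le> 6 * h" using h by (intro real_le_lsqrt) auto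
    also have "\<dots> \<le> (6 + 2 * sqrt K) * h" using h K by (simp add: distrib_right)
    finally show ?thesis .
  next
    assume a: "1/2 \<le> h"
    have "(\<integral>\<omega>. (F \<omega>)\<^sup>2 \<partial>M) \<le> (\<integral>\<omega>. (Z \<omega>)\<^sup>2 \<partial>M)"
    proof (rule integral_mono_AE[OF F2 Zi])
      show "AE \<omega> in M. (F \<omega>)\<^sup>2 \<le> (Z \<omega>)\<^sup>2"
        using FZ
      proof (rule AE_mp, intro AE_I2 impI)
        fix \<omega> assume "\<bar>F \<omega>\<bar> \<le> Z \<omega>"
        then have "\<bar>F \<omega>\<bar>\<^sup>2 \<le> (Z \<omega>)\<^sup>2" by (intro power_mono) auto
        then show "(F \<omega>)\<^sup>2 \<le> (Z \<omega>)\<^sup>2" by simp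
      qed
    qed
    also have "\<dots> \<le> K" by (rule ZK)
    also have "K \<le> (2 * sqrt K * h)\<^sup>2"
    proof -
      have "1 \<le> 2 * h" using a by simp
      then have "1\<^sup>2 \<le> (2 * h)\<^sup>2" by (intro power_mono) auto
      then have "1 \<le> (2 * h)\<^sup>2" by simp
      then have "K * 1 \<le> K * (2 * h)\<^sup>2" using K by (intro mult_left_mono) auto
      then show ?thesis using K by (simp add: power_mult_distrib)
    qed
    finally have "sqrt (\<integral>\<omega>. (F \<omega>)\<^sup>2 \<partial>M) \<le> 2 * sqrt K * h" using h K by (intro real_le_lsqrt) auto
    also have "\<dots> \<le> (6 + 2 * sqrt K) * h" using h by (simp add: distrib_right)
    finally show ?thesis .
  qed
  show ?thesis using F1 F2 J B by blast
qed



lemma axis_pos_sphere: "(axis j 1 :: real^'n) \<in> pos_sphere"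
  unfolding pos_sphere_def l1_def axis_def by (simp add: if_distrib sum.delta cong: if_cong)

lemma l1_axis: "nonneg (A::real^'n^'n) \<Longrightarrow> l1 (A *v axis j 1) = csum A j"
proof -
  assume n: "nonneg A"
  have ax: "\<And>i. 0 \<le> (axis j 1 :: real^'n) $ i" by (simp add: axis_def)
  have "(\<Sum>i\<in>UNIV. (axis j 1 :: real^'n) $ i * csum A i) = (\<Sum>i\<in>UNIV. if i = j then csum A i else 0)"
    by (intro sum.cong) (auto simp: axis_def)
  also have "\<dots> = csum A j" by simp
  finally show ?thesis using l1_mult[OF n ax] by simp
qed

lemma NN_bounds:
  assumes A: "allowable A"
  shows "WW A \<le> 2 * ln (NN A)" "0 \<le> ln (NN A)"
proof -
  have n: "nonneg A" using A by (rule allowable_nonneg)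
  have ne: "(pos_sphere :: (real^'n) set) \<noteq> {}" using axis_pos_sphere by blast
  have ba: "bdd_above ((\<lambda>x. l1 (A *v x)) ` pos_sphere)"
    using l1_bounds(2)[OF _ n] by (intro bdd_aboveI[of _ "maxc A"]) auto
  have bb: "bdd_below ((\<lambda>x. l1 (A *v x)) ` pos_sphere)"
    using l1_bounds(1)[OF _ n] by (intro bdd_belowI[of _ "minc A"]) auto
  obtain j where j: "maxc A = csum A j" using maxc_in by blast
  have "maxc A \<le> mnorm A" unfolding mnorm_def j l1_axis[OF n, of j, symmetric]
    by (rule cSUP_upper[OF axis_pos_sphere ba])
  obtain j' where j': "minc A = csum A j'" using minc_in by blast
  have io1: "iota A \<le> minc A" unfolding iota_def j' l1_axis[OF n, of j', symmetric]
    by (rule cINF_lower[OF bb axis_pos_sphere])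
  have io2: "minc A \<le> iota A" unfolding iota_def
    using l1_bounds(1)[OF _ n] by (intro cINF_greatest[OF ne]) auto
  have mp: "0 < minc A" using A by (rule minc_pos)
  have Mp: "minc A \<le> maxc A" by (rule minc_le_maxc)
  have N1: "maxc A \<le> NN A" using \<open>maxc A \<le> mnorm A\<close> unfolding NN_def by simp
  have N2: "1 / minc A \<le> NN A" using io1 io2 unfolding NN_def by (simp add: inverse_eq_divide)
  have Np: "0 < NN A" using N1 Mp mp by linarith
  have "ln (maxc A) \<le> ln (NN A)" using N1 Mp mp by (subst ln_le_cancel_iff) auto
  moreover have "ln (1 / minc A) \<le> ln (NN A)" using N2 mp Np by (subst ln_le_cancel_iff) auto
  ultimately show "WW A \<le> 2 * ln (NN A)" unfolding WW_def using mp by (simp add: ln_div)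
  have "1 \<le> NN A"
  proof (cases "1 \<le> maxc A")
    case True then show ?thesis using N1 by linarith
  next
    case False
    then have "minc A \<le> 1" using Mp by linarith
    then have "1 \<le> 1 / minc A" using mp by (simp add: field_simps)
    then show ?thesis using N2 by linarith
  qed
  then show "0 \<le> ln (NN A)" by simp
qed

lemma WW_sq_bound:
  assumes A: "allowable A" and d: "0 < \<delta>"
  shows "(WW A)\<^sup>2 \<le> 4 * (1 + (ln (NN A)) powr (2 + \<delta>))"
proof -
  define L where "L = ln (NN A)"
  have L0: "0 \<le> L" and WL: "WW A \<le> 2 * L" using NN_bounds[OF A] by (auto simp: L_def)
  have W0: "0 \<le> WW A" using A by (rule WW_nonneg)
  have "(WW A)\<^sup>2 \<le> (2 * L)\<^sup>2" using W0 WL by (intro power_mono) auto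
  also have "\<dots> = 4 * L\<^sup>2" by (simp add: power_mult_distrib)
  also have "L\<^sup>2 \<le> 1 + L powr (2 + \<delta>)"
  proof (cases "L \<le> 1")
    case True
    then have "L\<^sup>2 \<le> 1" using L0 by (simp add: power_le_one)
    then show ?thesis by (smt (verit) powr_ge_zero)
  next
    case False
    then have "L\<^sup>2 = L powr 2" using powr_realpow[of L 2] by simp
    also have "\<dots> \<le> L powr (2 + \<delta>)" using False d by (intro powr_mono) auto
    finally show ?thesis by simp
  qed
  finally show ?thesis by (simp add: L_def)
qed

lemma K0_integrable:
  fixes g :: "nat \<Rightarrow> 'w \<Rightarrow> real^'n^'n"
  assumes P: "prob_space M" and gm: "g 0 \<in> borel_measurable M"
    and law: "distr M borel (g 0) = \<mu>"
    and allow: "AE A in \<mu>. allowable A"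
    and A2: "\<exists>\<delta>>0. integrable \<mu> (\<lambda>A. (ln (NN A)) powr (2 + \<delta>))"
  shows "integrable \<mu> (\<lambda>A. (WW A)\<^sup>2)"
proof -
  obtain \<delta> where d: "0 < \<delta>" and I: "integrable \<mu> (\<lambda>A. (ln (NN A)) powr (2 + \<delta>))" using A2 by blast
  interpret Q: prob_space \<mu> unfolding law[symmetric] by (rule prob_space.prob_space_distr[OF P gm])
  have I2: "integrable \<mu> (\<lambda>A. 4 * (1 + (ln (NN A)) powr (2 + \<delta>)))" using I by simp
  show ?thesis
  proof (rule Bochner_Integration.integrable_bound[OF I2])
    show "(\<lambda>A. (WW A)\<^sup>2) \<in> borel_measurable \<mu>"
      using measurable_cong_sets[of \<mu> borel borel borel] law[symmetric] by (simp add: borel_measurable_power)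
    show "AE A in \<mu>. norm ((WW A)\<^sup>2) \<le> norm (4 * (1 + (ln (NN A)) powr (2 + \<delta>)))"
      using allow
    proof (rule AE_mp, intro AE_I2 impI)
      fix A assume "allowable A"
      from WW_sq_bound[OF this d]
      show "norm ((WW A)\<^sup>2) \<le> norm (4 * (1 + (ln (NN A)) powr (2 + \<delta>)))" by simp
    qed
  qed
qed

lemma sp_good:
  fixes A :: "real^'n^'n"
  assumes "strictly_positive A"
  shows "\<exists>N>0. good (inverse (real N)) A"
proof -
  define E where "E = range (\<lambda>p::'n \<times> 'n. A $ fst p $ snd p)"
  have fin: "finite E" "E \<noteq> {}" unfolding E_def by auto
  define mn where "mn = Min E"
  define mx where "mx = Max E"
  have inE: "A $ i $ j \<in> E" for i j
  proof -
    have "A $ i $ j = (\<lambda>p::'n \<times> 'n. A $ fst p $ snd p) (i, j)" by simp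
    then show ?thesis unfolding E_def by (rule image_eqI) simp
  qed
  have le: "\<And>i j. mn \<le> A $ i $ j" "\<And>i j. A $ i $ j \<le> mx"
    unfolding mn_def mx_def using fin inE by auto
  have "mn \<in> E" unfolding mn_def using fin by (rule Min_in)
  then have mnp: "0 < mn" using assms unfolding E_def strictly_positive_def by auto
  have mxp: "0 < mx" using le mnp by (meson order.strict_trans2)
  obtain N :: nat where N: "N > 0" "inverse (real N) < mn / mx"
    using ex_inverse_of_nat_less[of "mn / mx"] mnp mxp by auto
  have "good (inverse (real N)) A" unfolding good_def
  proof (intro conjI allI)
    fix i j show "0 < A $ i $ j" using assms unfolding strictly_positive_def by auto
  next
    fix i j k l
    have "inverse (real N) * A $ k $ l \<le> (mn / mx) * A $ k $ l"
      using N mnp le(1)[of k l] by (intro mult_right_mono) auto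
    also have "\<dots> \<le> (mn / mx) * mx" using le(2)[of k l] mnp mxp by (intro mult_left_mono) auto
    also have "\<dots> = mn" using mxp by simp
    also have "\<dots> \<le> A $ i $ j" by (rule le(1))
    finally show "inverse (real N) * A $ k $ l \<le> A $ i $ j" .
  qed
  then show ?thesis using N by blast
qed



theorem lemma2p7:
  fixes M :: "'w measure"
    and \<mu> :: "(real ^ 'n ^ 'n) measure"
    and g :: "nat \<Rightarrow> 'w \<Rightarrow> real ^ 'n ^ 'n"
  assumes dim: "CARD('n) \<ge> 2"
    and P: "prob_space M"
    and indep: "prob_space.indep_vars M (\<lambda>_. borel) g UNIV"
    and law: "\<And>k. distr M borel (g k) = \<mu>"
    and allow: "AE A in \<mu>. allowable A"
    and A1: "measure M {\<omega> \<in> space M. \<exists>n\<ge>1. strictly_positive (lprod (\<lambda>k. g k \<omega>) n)} > 0"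
    and A2: "\<exists>\<delta>>0. integrable \<mu> (\<lambda>A. (ln (NN A)) powr (2 + \<delta>))"
  shows "\<exists>c>0. \<forall>x\<in>pos_sphere. \<forall>x'\<in>pos_sphere. \<forall>n\<ge>1.
     (let D = (\<lambda>\<omega>. Slog (\<lambda>k. g k \<omega>) n x - Slog (\<lambda>k. g k \<omega>) n x');
          E = (\<lambda>\<omega>. Min ((\<lambda>j. Slog (\<lambda>k. g k \<omega>) j x) ` {1..n})
                  - Min ((\<lambda>j. Slog (\<lambda>k. g k \<omega>) j x') ` {1..n}))
      in integrable M (\<lambda>\<omega>. \<bar>D \<omega>\<bar>) \<and> integrable M (\<lambda>\<omega>. (D \<omega>)\<^sup>2)
       \<and> (\<integral>\<omega>. \<bar>D \<omega>\<bar> \<partial>M) \<le> sqrt (\<integral>\<omega>. (D \<omega>)\<^sup>2 \<partial>M)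
       \<and> sqrt (\<integral>\<omega>. (D \<omega>)\<^sup>2 \<partial>M) \<le> c * hdist x x'
       \<and> integrable M (\<lambda>\<omega>. \<bar>E \<omega>\<bar>) \<and> integrable M (\<lambda>\<omega>. (E \<omega>)\<^sup>2)
       \<and> (\<integral>\<omega>. \<bar>E \<omega>\<bar> \<partial>M) \<le> sqrt (\<integral>\<omega>. (E \<omega>)\<^sup>2 \<partial>M)
       \<and> sqrt (\<integral>\<omega>. (E \<omega>)\<^sup>2 \<partial>M) \<le> c * hdist x x')"
proof -
  interpret prob_space M by (rule P)
  have gm[measurable]: "\<And>k. g k \<in> borel_measurable M"
    using indep unfolding indep_vars_def by auto
  have allAE: "AE \<omega> in M. \<forall>k. allowable (g k \<omega>)"
  proof (subst AE_all_countable, intro allI)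
    fix k
    have "AE A in distr M borel (g k). allowable A" unfolding law[of k] by (rule allow)
    then show "AE \<omega> in M. allowable (g k \<omega>)" by (rule AE_distrD[OF gm])
  qed
  have Gm: "\<And>n. (\<lambda>\<omega>. lprod (\<lambda>i. g i \<omega>) n) \<in> borel_measurable M"
    by (rule meas_lprod) simp
  define gset where "gset n N = {\<omega> \<in> space M. good (inverse (real N)) (lprod (\<lambda>i. g i \<omega>) n)}" for n N
  have gsets: "\<And>n N. gset n N \<in> sets M"
    unfolding gset_def using measurable_compose[OF Gm meas_good] by (simp add: pred_def)
  have "\<exists>n\<ge>1. \<exists>N>0. prob (gset n N) \<noteq> 0"
  proof (rule ccontr)
    assume "\<not> (\<exists>n\<ge>1. \<exists>N>0. prob (gset n N) \<noteq> 0)"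
    then have z: "\<And>n N. 1 \<le> n \<Longrightarrow> 0 < N \<Longrightarrow> AE \<omega> in M. \<omega> \<notin> gset n N"
      using prob_eq_0[OF gsets] by blast
    have "AE \<omega> in M. \<forall>n. \<forall>N. 1 \<le> n \<longrightarrow> 0 < N \<longrightarrow> \<omega> \<notin> gset n N"
    proof (subst AE_all_countable, intro allI, subst AE_all_countable, intro allI)
      fix n N :: nat
      show "AE \<omega> in M. 1 \<le> n \<longrightarrow> 0 < N \<longrightarrow> \<omega> \<notin> gset n N"
        by (cases "1 \<le> n \<and> 0 < N") (use z in auto)
    qed
    then have "AE \<omega> in M. \<not> (\<exists>n\<ge>1. strictly_positive (lprod (\<lambda>k. g k \<omega>) n))"
    proof (rule AE_mp, intro AE_I2 impI notI)
      fix \<omega> assume \<omega>: "\<omega> \<in> space M" and H: "\<forall>n N. 1 \<le> n \<longrightarrow> 0 < N \<longrightarrow> \<omega> \<notin> gset n N"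
        and "\<exists>n\<ge>1. strictly_positive (lprod (\<lambda>k. g k \<omega>) n)"
      then obtain n where n: "1 \<le> n" "strictly_positive (lprod (\<lambda>k. g k \<omega>) n)" by blast
      obtain N where "N > 0" "good (inverse (real N)) (lprod (\<lambda>k. g k \<omega>) n)" using sp_good[OF n(2)] by blast
      then have "\<omega> \<in> gset n N" unfolding gset_def using \<omega> by simp
      then show False using H n \<open>N > 0\<close> by blast
    qed
    from prob_eq_0_AE[OF this] show False using A1 by simp
  qed
  then obtain m N where m: "1 \<le> m" and N: "0 < N" and p0: "prob (gset m N) \<noteq> 0" by blast
  define e where "e = inverse (real N)"
  define p where "p = prob (gset m N)"
  have "1 \<le> real N" using N by simp
  then have e: "0 < e" "e \<le> 1" using N by (auto simp: e_def inverse_le_1_iff)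
  have pp: "0 < p" using p0 measure_nonneg[of M "gset m N"] unfolding p_def by linarith
  have mp: "0 < m" using m by simp
  have pg: "\<And>s. measure M {\<omega> \<in> space M. good e (lprod (\<lambda>k. g (s + k) \<omega>) m)} = p"
  proof -
    fix s
    have "measure M {\<omega> \<in> space M. good e (lprod (\<lambda>k. g (s + k) \<omega>) m)}
        = measure M {\<omega> \<in> space M. good e (lprod (\<lambda>k. g (0 + k) \<omega>) m)}"
      using block_prob[OF P indep law mp, of e s] block_prob[OF P indep law mp, of e 0] by simp
    also have "\<dots> = p" unfolding p_def gset_def e_def by simp
    finally show "measure M {\<omega> \<in> space M. good e (lprod (\<lambda>k. g (s + k) \<omega>) m)} = p" .
  qed
  have K0: "integrable \<mu> (\<lambda>A. (WW A)\<^sup>2)"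
    by (rule K0_integrable[OF P gm law allow A2])
  obtain K where K: "\<And>n. integrable M (\<lambda>\<omega>. (ZZ e (\<lambda>k. g k \<omega>) m n)\<^sup>2)"
      "\<And>n. (\<integral>\<omega>. (ZZ e (\<lambda>k. g k \<omega>) m n)\<^sup>2 \<partial>M) \<le> K"
    using main_bound[OF P indep law mp e(1) pg pp K0] by blast
  define K' where "K' = max K 0"
  have K': "0 \<le> K'" "\<And>n. (\<integral>\<omega>. (ZZ e (\<lambda>k. g k \<omega>) m n)\<^sup>2 \<partial>M) \<le> K'"
    unfolding K'_def using K(2) by (auto intro: le_max_iff_disj[THEN iffD2])
  define c where "c = 6 + 2 * sqrt K'"
  have Sm: "\<And>j y. (\<lambda>\<omega>. Slog (\<lambda>k. g k \<omega>) j y) \<in> borel_measurable M"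
    unfolding Slog_def by (intro borel_measurable_ln measurable_compose[OF Gm meas_l1mv])
  show ?thesis
  proof (intro exI[of _ c] conjI ballI allI impI)
    show "0 < c" unfolding c_def using K'(1) by (intro add_pos_nonneg) auto
    fix x x' :: "real^'n" and n :: nat
    assume x: "x \<in> pos_sphere" and x': "x' \<in> pos_sphere" and n: "1 \<le> n"
    define t where "t = mratio x x' * mratio x' x"
    define h where "h = hdist x x'"
    have t0: "0 \<le> t" "t \<le> 1" unfolding t_def
      using mratio_nonneg[OF x x'] mratio_nonneg[OF x' x] mratio_le1[OF x x'] mratio_le1[OF x' x]
      by (auto simp: mult_le_one)
    have h0: "0 \<le> h" unfolding h_def hdist_def using t0 by (simp add: t_def)
    define D where "D \<omega> = Slog (\<lambda>k. g k \<omega>) n x - Slog (\<lambda>k. g k \<omega>) n x'" for \<omega>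
    define E where "E \<omega> = Min ((\<lambda>j. Slog (\<lambda>k. g k \<omega>) j x) ` {1..n})
                  - Min ((\<lambda>j. Slog (\<lambda>k. g k \<omega>) j x') ` {1..n})" for \<omega>
    have key: "\<bar>Slog (\<lambda>k. g k \<omega>) j x - Slog (\<lambda>k. g k \<omega>) j x'\<bar> \<le> ZZ e (\<lambda>k. g k \<omega>) m n
       \<and> (1/3 \<le> t \<longrightarrow> \<bar>Slog (\<lambda>k. g k \<omega>) j x - Slog (\<lambda>k. g k \<omega>) j x'\<bar> \<le> 6 * h)"
      if al: "\<forall>k. allowable (g k \<omega>)" and j: "j \<le> n" for \<omega> j
    proof -
      have A: "allowable (lprod (\<lambda>k. g k \<omega>) j)" using al by (intro lprod_allowable) auto
      have "n \<le> m * n" using m by simp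
      then have jm: "j \<le> m * n" using j by linarith
      have "WW (lprod (\<lambda>k. g k \<omega>) j) \<le> ZZ e (\<lambda>k. g k \<omega>) m n"
        using al e by (intro WW_ZZ jm) auto
      then show ?thesis using D_bound[OF x x' A] D_bound_small[OF x x' A]
        unfolding Slog_def t_def h_def by auto
    qed
    have case_split: "1/3 \<le> t \<or> 1/2 \<le> h"
      using hdist_large[of x x'] t0 unfolding t_def h_def by linarith
    have DZ: "AE \<omega> in M. \<bar>D \<omega>\<bar> \<le> ZZ e (\<lambda>k. g k \<omega>) m n \<and> (1/3 \<le> t \<longrightarrow> \<bar>D \<omega>\<bar> \<le> 6 * h)"
      using allAE
    proof (rule AE_mp, intro AE_I2 impI)
      fix \<omega> assume al: "\<forall>k. allowable (g k \<omega>)"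
      show "\<bar>D \<omega>\<bar> \<le> ZZ e (\<lambda>k. g k \<omega>) m n \<and> (1/3 \<le> t \<longrightarrow> \<bar>D \<omega>\<bar> \<le> 6 * h)"
        unfolding D_def by (rule key[OF al]) simp
    qed
    have EZ: "AE \<omega> in M. \<bar>E \<omega>\<bar> \<le> ZZ e (\<lambda>k. g k \<omega>) m n \<and> (1/3 \<le> t \<longrightarrow> \<bar>E \<omega>\<bar> \<le> 6 * h)"
      using allAE
    proof (rule AE_mp, intro AE_I2 impI conjI)
      fix \<omega> assume al: "\<forall>k. allowable (g k \<omega>)"
      show "\<bar>E \<omega>\<bar> \<le> ZZ e (\<lambda>k. g k \<omega>) m n"
        unfolding E_def using key[OF al] n by (intro Min_diff_bound) auto
    next
      fix \<omega> assume al: "\<forall>k. allowable (g k \<omega>)" and t3: "1/3 \<le> t"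
      show "\<bar>E \<omega>\<bar> \<le> 6 * h"
        unfolding E_def using key[OF al] n t3 by (intro Min_diff_bound) auto
    qed
    have Dm: "D \<in> borel_measurable M" unfolding D_def[abs_def] using Sm by measurable
    have Em: "E \<in> borel_measurable M" unfolding E_def[abs_def]
      by (intro borel_measurable_diff borel_measurable_Min Sm) auto
    have cD: "(AE \<omega> in M. \<bar>D \<omega>\<bar> \<le> 6 * h) \<or> 1/2 \<le> h"
      using case_split DZ by (auto elim: AE_mp intro: AE_I2)
    have cE: "(AE \<omega> in M. \<bar>E \<omega>\<bar> \<le> 6 * h) \<or> 1/2 \<le> h"
      using case_split EZ by (auto elim: AE_mp intro: AE_I2)
    have fD': "integrable M (\<lambda>\<omega>. \<bar>D \<omega>\<bar>) \<and> integrable M (\<lambda>\<omega>. (D \<omega>)\<^sup>2)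
      \<and> (\<integral>\<omega>. \<bar>D \<omega>\<bar> \<partial>M) \<le> sqrt (\<integral>\<omega>. (D \<omega>)\<^sup>2 \<partial>M) \<and> sqrt (\<integral>\<omega>. (D \<omega>)\<^sup>2 \<partial>M) \<le> c * h"
      unfolding c_def by (rule finish[OF P Dm _ K(1) K'(2) h0 K'(1) cD]) (use DZ in \<open>auto elim: AE_mp intro: AE_I2\<close>)
    have fE': "integrable M (\<lambda>\<omega>. \<bar>E \<omega>\<bar>) \<and> integrable M (\<lambda>\<omega>. (E \<omega>)\<^sup>2)
      \<and> (\<integral>\<omega>. \<bar>E \<omega>\<bar> \<partial>M) \<le> sqrt (\<integral>\<omega>. (E \<omega>)\<^sup>2 \<partial>M) \<and> sqrt (\<integral>\<omega>. (E \<omega>)\<^sup>2 \<partial>M) \<le> c * h"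
      unfolding c_def by (rule finish[OF P Em _ K(1) K'(2) h0 K'(1) cE]) (use EZ in \<open>auto elim: AE_mp intro: AE_I2\<close>)
    show "let D = (\<lambda>\<omega>. Slog (\<lambda>k. g k \<omega>) n x - Slog (\<lambda>k. g k \<omega>) n x');
          E = (\<lambda>\<omega>. Min ((\<lambda>j. Slog (\<lambda>k. g k \<omega>) j x) ` {1..n})
                  - Min ((\<lambda>j. Slog (\<lambda>k. g k \<omega>) j x') ` {1..n}))
      in integrable M (\<lambda>\<omega>. \<bar>D \<omega>\<bar>) \<and> integrable M (\<lambda>\<omega>. (D \<omega>)\<^sup>2)
       \<and> (\<integral>\<omega>. \<bar>D \<omega>\<bar> \<partial>M) \<le> sqrt (\<integral>\<omega>. (D \<omega>)\<^sup>2 \<partial>M)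
       \<and> sqrt (\<integral>\<omega>. (D \<omega>)\<^sup>2 \<partial>M) \<le> c * hdist x x'
       \<and> integrable M (\<lambda>\<omega>. \<bar>E \<omega>\<bar>) \<and> integrable M (\<lambda>\<omega>. (E \<omega>)\<^sup>2)
       \<and> (\<integral>\<omega>. \<bar>E \<omega>\<bar> \<partial>M) \<le> sqrt (\<integral>\<omega>. (E \<omega>)\<^sup>2 \<partial>M)
       \<and> sqrt (\<integral>\<omega>. (E \<omega>)\<^sup>2 \<partial>M) \<le> c * hdist x x'"
      unfolding Let_def using fD' fE' unfolding D_def[abs_def] E_def[abs_def] h_def by blast
  qed
qed


end
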